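(* Let $L$ be a friendly labeling function, $T$ a tree with root edge, and $e$ an interior edge of $T$. Let $$g=\prod_{i=1}^d q_{(l_i,m_i)}-\prod_{i=1}^d q_{(l'_i,m_i)}\in I_{T_{e,-},L},$$ where $(l_i,m_i),(l'_i,m_i)\in{\rm im}(L^{T_{e,-}})$ and $m_i$ denotes the label on $e$. Let $n_1,\dots,n_d$ be labelings of the edges of $T_{e,+}$ other than $e$ such that $(m_i,n_i)\in{\rm im}(L^{T_{e,+}})$ for each $i$. Then $(l_i,m_i,n_i),(l'_i,m_i,n_i)\in{\rm im}(L^T)$ for all $i$, and $$g^*=\prod_{i=1}^d q_{(l_i,m_i,n_i)}-\prod_{i=1}^d q_{(l'_i,m_i,n_i)}$$ lies in $I_{T,L}$. The analogous statement holds with the roles of $T_{e,-}$ and $T_{e,+}$ exchanged.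
   Context: Let $G$ be a finite abelian group written additively, $\mathcal{L}$ a finite set, $L:G\to\mathcal{L}$ a function. A tree with root edge is a finite tree $T$ with a distinguished leaf $\rho$; the edge at $\rho$ is the root edge. Every vertex $v\neq\rho$ has a unique parent edge (first edge on the path from $v$ to $\rho$); other edges at $v$ are child edges. Vertices that are neither $\rho$ nor leaves are interior vertices; an edge is interior if both endpoints are interior vertices. $E(T)$ is the edge set. An edge $e'$ is below $e$ if $e$ lies on the path from $\rho$ to $e'$ (so $e$ is below itself). A map $h:E(T)\to G$ is a consistent assignment if for every interior vertex $v$, $h(\text{parent edge of }v)=\sum h(\text{child edges of }v)$. ${\rm im}(L^T)=\{L\circ h: h\text{ consistent}\}$ is the set of consistent labelings. $I_{T,L}$ is the kernel of $\mathbb{C}[q_\lambda:\lambda\in{\rm im}(L^T)]\to\mathbb{C}[a^{(e)}_l:e\in E(T),l\in\mathcal{L}]$, $q_\lambda\mapsto\prod_{e\in E(T)}a^{(e)}_{\lambda(e)}$; the same definitions apply to any tree with root edge. For an edge $e$, $T_{e,-}$ is the tree formed by all edges below $e$, regarded as a tree with root edge $e$ (distinguished leaf = endpoint of $e$ closer to $\rho$); $T_{e,+}$ is the tree formed by $e$ and all edges not below $e$, with the same $\rho$ (the endpoint of $e$ farther from $\rho$ becomes a leaf). Labelings of $T_{e,-}$ are written $(l,m)$ and of $T_{e,+}$ as $(m,n)$, and of $T$ as $(l,m,n)$, where $l$ is the restriction to edges of $T_{e,-}$ other than $e$, $m$ the value on $e$, $n$ the restriction to edges of $T_{e,+}$ other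 than $e$. Friendliness: for $m\ge3$ let $Z_m=\{(g_1,\dots,g_m)\in G^m: g_1+\cdots+g_{m-1}=g_m\}$ and $\widetilde{L}(g_1,\dots,g_m)=(L(g_1),\dots,L(g_m))$; $L$ is $m$-friendly if for every $l\in\widetilde{L}(Z_m)$ and every $i$, the set of $i$-th coordinates of elements of $\widetilde{L}^{-1}(l)$ equals $L^{-1}(l_i)$; $L$ is friendly if it is $m$-friendly for all $m\ge3$. *)

theory Defs
  imports Complex_Main "HOL-Library.Multiset" "HOL-Library.FuncSet"
begin

definition verts :: "'v set set \<Rightarrow> 'v set" where
  "verts E = \<Union>E"

definition graph_edges :: "'v set set \<Rightarrow> bool" where
  "graph_edges E \<longleftrightarrow> finite E \<and> (\<forall>e\<in>E. card e = 2)"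

definition is_path :: "'v set set \<Rightarrow> 'v list \<Rightarrow> bool" where
  "is_path E ps \<longleftrightarrow> ps \<noteq> [] \<and> distinct ps \<and> set ps \<subseteq> verts E \<and>
     (\<forall>i. Suc i < length ps \<longrightarrow> {ps ! i, ps ! Suc i} \<in> E)"

definition path_edges :: "'v list \<Rightarrow> 'v set set" where
  "path_edges ps = {{ps ! i, ps ! Suc i} | i. Suc i < length ps}"

definition connected_graph :: "'v set set \<Rightarrow> bool" where
  "connected_graph E \<longleftrightarrow> (\<forall>u\<in>verts E. \<forall>v\<in>verts E.
     \<exists>ps. is_path E ps \<and> hd ps = u \<and> last ps = v)"

definition acyclic_graph :: "'v set set \<Rightarrow> bool" where
  "acyclic_graph E \<longleftrightarrow> \<not> (\<exists>ps. is_path E ps \<and> length ps \<ge> 3 \<and> {last ps, hd ps} \<in> E)"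

definition is_tree :: "'v set set \<Rightarrow> bool" where
  "is_tree E \<longleftrightarrow> graph_edges E \<and> E \<noteq> {} \<and> connected_graph E \<and> acyclic_graph E"

definition degree :: "'v set set \<Rightarrow> 'v \<Rightarrow> nat" where
  "degree E v = card {e\<in>E. v \<in> e}"

definition leaf :: "'v set set \<Rightarrow> 'v \<Rightarrow> bool" where
  "leaf E v \<longleftrightarrow> v \<in> verts E \<and> degree E v = 1"

text \<open>A tree with root edge: a tree with a distinguished leaf \<open>\<rho>\<close>.\<close>
definition rooted_tree :: "'v set set \<Rightarrow> 'v \<Rightarrow> bool" where
  "rooted_tree E \<rho> \<longleftrightarrow> is_tree E \<and> leaf E \<rho>"

definition interior_vertex :: "'v set set \<Rightarrow> 'v \<Rightarrow> 'v \<Rightarrow> bool" where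
  "interior_vertex E \<rho> v \<longleftrightarrow> v \<in> verts E \<and> v \<noteq> \<rho> \<and> \<not> leaf E v"

definition interior_edge :: "'v set set \<Rightarrow> 'v \<Rightarrow> 'v set \<Rightarrow> bool" where
  "interior_edge E \<rho> e \<longleftrightarrow> e \<in> E \<and> (\<forall>v\<in>e. interior_vertex E \<rho> v)"

definition parent_edge :: "'v set set \<Rightarrow> 'v \<Rightarrow> 'v \<Rightarrow> 'v set" where
  "parent_edge E \<rho> v = (THE e. \<exists>ps. is_path E ps \<and> hd ps = v \<and> last ps = \<rho> \<and>
       length ps \<ge> 2 \<and> e = {ps ! 0, ps ! 1})"

definition child_edges :: "'v set set \<Rightarrow> 'v \<Rightarrow> 'v \<Rightarrow> 'v set set" where
  "child_edges E \<rho> v = {e\<in>E. v \<in> e \<and> e \<noteq> parent_edge E \<rho> v}"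

definition below :: "'v set set \<Rightarrow> 'v \<Rightarrow> 'v set \<Rightarrow> 'v set \<Rightarrow> bool" where
  "below E \<rho> e e' \<longleftrightarrow> (\<exists>ps. is_path E ps \<and> hd ps = \<rho> \<and> length ps \<ge> 2 \<and>
       {ps ! (length ps - 2), last ps} = e' \<and> e \<in> path_edges ps)"

definition consistent :: "'v set set \<Rightarrow> 'v \<Rightarrow> ('v set \<Rightarrow> 'g::ab_group_add) \<Rightarrow> bool" where
  "consistent E \<rho> h \<longleftrightarrow> (\<forall>v. interior_vertex E \<rho> v \<longrightarrow>
       h (parent_edge E \<rho> v) = (\<Sum>c\<in>child_edges E \<rho> v. h c))"

text \<open>\<open>im(L^T)\<close>: labelings are functions on the edge set (extensional).\<close>
definition im_lab :: "'v set set \<Rightarrow> 'v \<Rightarrow> ('g::ab_group_add \<Rightarrow> 'l) \<Rightarrow> ('v set \<Rightarrow> 'l) set" where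
  "im_lab E \<rho> L = {restrict (L \<circ> h) E | h. consistent E \<rho> h}"

definition T_minus :: "'v set set \<Rightarrow> 'v \<Rightarrow> 'v set \<Rightarrow> 'v set set" where
  "T_minus E \<rho> e = {e'\<in>E. below E \<rho> e e'}"

text \<open>Endpoint of \<open>e\<close> closer to \<open>\<rho>\<close> (the root leaf of \<open>T_{e,-}\<close>).\<close>
definition near_end :: "'v set set \<Rightarrow> 'v \<Rightarrow> 'v set \<Rightarrow> 'v" where
  "near_end E \<rho> e = (THE u. u \<in> e \<and>
      (\<exists>ps. is_path E ps \<and> hd ps = \<rho> \<and> last ps = u \<and> e \<notin> path_edges ps))"

definition T_plus :: "'v set set \<Rightarrow> 'v \<Rightarrow> 'v set \<Rightarrow> 'v set set" where
  "T_plus E \<rho> e = insert e (E - T_minus E \<rho> e)"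

text \<open>The labeling \<open>(l,m,n)\<close> of \<open>T\<close> glued from \<open>(l,m)\<close> on \<open>T_{e,-}\<close> and \<open>(m,n)\<close> on \<open>T_{e,+}\<close>.\<close>
definition glue :: "'v set set \<Rightarrow> 'v set set \<Rightarrow> ('v set \<Rightarrow> 'l) \<Rightarrow> ('v set \<Rightarrow> 'l) \<Rightarrow> ('v set \<Rightarrow> 'l)" where
  "glue E Em lm mn = restrict (\<lambda>x. if x \<in> Em then lm x else mn x) E"

definition Zm :: "nat \<Rightarrow> 'g::ab_group_add list set" where
  "Zm m = {gs. length gs = m \<and> sum_list (butlast gs) = last gs}"

definition m_friendly :: "nat \<Rightarrow> ('g::ab_group_add \<Rightarrow> 'l) \<Rightarrow> bool" where
  "m_friendly m L \<longleftrightarrow> (\<forall>l \<in> map L ` Zm m. \<forall>i<m.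
      {gs ! i | gs. gs \<in> Zm m \<and> map L gs = l} = L -` {l ! i})"

definition friendly :: "('g::ab_group_add \<Rightarrow> 'l) \<Rightarrow> bool" where
  "friendly L \<longleftrightarrow> (\<forall>m\<ge>3. m_friendly m L)"

text \<open>Polynomials in the variables \<open>q_\<lambda>\<close> are finitely supported coefficient functions on
  monomials; a monomial is a multiset of variables (labelings).  The ring map
  \<open>q_\<lambda> \<mapsto> \<Prod>_e a^(e)_{\<lambda>(e)}\<close> sends the monomial \<open>\<alpha>\<close> to the monomial in the variables
  \<open>a^(e)_l\<close> (encoded as pairs \<open>(e,l)\<close>) given by \<open>mono_img\<close>; a polynomial is in the kernel
  iff for every target monomial the coefficients mapping to it sum to zero.\<close>

definition mono_img :: "'v set set \<Rightarrow> ('v set \<Rightarrow> 'l) multiset \<Rightarrow> ('v set \<times> 'l) multiset" where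
  "mono_img E \<alpha> = sum_mset (image_mset (\<lambda>lab. mset_set ((\<lambda>x. (x, lab x)) ` E)) \<alpha>)"

definition toric_ideal :: "'v set set \<Rightarrow> 'v \<Rightarrow> ('g::ab_group_add \<Rightarrow> 'l)
    \<Rightarrow> (('v set \<Rightarrow> 'l) multiset \<Rightarrow> complex) set" where
  "toric_ideal E \<rho> L = {p. finite {\<alpha>. p \<alpha> \<noteq> 0} \<and>
      (\<forall>\<alpha>. p \<alpha> \<noteq> 0 \<longrightarrow> set_mset \<alpha> \<subseteq> im_lab E \<rho> L) \<and>
      (\<forall>\<beta>. (\<Sum>\<alpha>\<in>{\<alpha>. p \<alpha> \<noteq> 0 \<and> mono_img E \<alpha> = \<beta>}. p \<alpha>) = 0)}"

definition binom :: "nat \<Rightarrow> (nat \<Rightarrow> 'a) \<Rightarrow> (nat \<Rightarrow> 'a) \<Rightarrow> ('a multiset \<Rightarrow> complex)" where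
  "binom d A B = (\<lambda>\<alpha>. (if \<alpha> = mset (map A [0..<d]) then 1 else 0)
                    - (if \<alpha> = mset (map B [0..<d]) then 1 else 0))"

end

theory Submission
  imports Defs
begin


lemma is_path_single: "is_path E [a] \<longleftrightarrow> a \<in> verts E"
  by (simp add: is_path_def)

lemma is_path_Cons2: "is_path E (a # b # ps) \<longleftrightarrow> {a,b} \<in> E \<and> a \<notin> set (b#ps) \<and> a \<in> verts E \<and> is_path E (b # ps)"
proof
  assume H: "is_path E (a # b # ps)"
  have "\<forall>i. Suc i < length (b#ps) \<longrightarrow> {(b#ps) ! i, (b#ps) ! Suc i} \<in> E"
  proof (intro allI impI)
    fix i assume "Suc i < length (b#ps)"
    then have "Suc (Suc i) < length (a#b#ps)" by simp
    then show "{(b#ps) ! i, (b#ps) ! Suc i} \<in> E" using H unfolding is_path_def by fastforce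
  qed
  moreover have "{a,b} \<in> E" using H unfolding is_path_def by (metis One_nat_def length_Cons less_Suc_eq_0_disj nth_Cons_0 nth_Cons_Suc zero_less_Suc)
  ultimately show "{a,b} \<in> E \<and> a \<notin> set (b#ps) \<and> a \<in> verts E \<and> is_path E (b # ps)"
    using H unfolding is_path_def by auto
next
  assume H: "{a,b} \<in> E \<and> a \<notin> set (b#ps) \<and> a \<in> verts E \<and> is_path E (b # ps)"
  show "is_path E (a # b # ps)" unfolding is_path_def
  proof (intro conjI allI impI)
    fix i assume i: "Suc i < length (a # b # ps)"
    show "{(a # b # ps) ! i, (a # b # ps) ! Suc i} \<in> E"
    proof (cases i)
      case 0 then show ?thesis using H by simp
    next
      case (Suc j) then show ?thesis using H i unfolding is_path_def by auto
    qed
  qed (use H in \<open>auto simp: is_path_def\<close>)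
qed

lemma is_path_take: "is_path E ps \<Longrightarrow> 0 < n \<Longrightarrow> is_path E (take n ps)"
  unfolding is_path_def
  by (auto simp: nth_take dest: in_set_takeD)

lemma is_path_drop: "is_path E ps \<Longrightarrow> n < length ps \<Longrightarrow> is_path E (drop n ps)"
  unfolding is_path_def
  by (auto simp: nth_drop dest: in_set_dropD)

lemma is_path_rev1: "is_path E ps \<Longrightarrow> is_path E (rev ps)"
  unfolding is_path_def
proof (intro conjI allI impI)
  fix i assume H: "ps \<noteq> [] \<and> distinct ps \<and> set ps \<subseteq> verts E \<and> (\<forall>i. Suc i < length ps \<longrightarrow> {ps ! i, ps ! Suc i} \<in> E)"
    and i: "Suc i < length (rev ps)"
  define j where "j = length ps - Suc (Suc i)"
  have "Suc j < length ps" using i j_def by auto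
  then have "{ps ! j, ps ! Suc j} \<in> E" using H by blast
  moreover have "rev ps ! i = ps ! Suc j" "rev ps ! Suc i = ps ! j" using i j_def by (auto simp: rev_nth Suc_diff_Suc)
  ultimately show "{rev ps ! i, rev ps ! Suc i} \<in> E" by (simp add: insert_commute)
qed auto

lemma is_path_rev: "is_path E (rev ps) \<longleftrightarrow> is_path E ps"
  using is_path_rev1[of E ps] is_path_rev1[of E "rev ps"] by auto

lemma path_edges_rev1: "path_edges (rev ps) \<subseteq> path_edges ps"
proof
  fix c assume "c \<in> path_edges (rev ps)"
  then obtain i where i: "Suc i < length ps" and c: "c = {rev ps ! i, rev ps ! Suc i}" unfolding path_edges_def by auto
  define j where "j = length ps - Suc (Suc i)"
  have j: "Suc j < length ps" using i j_def by auto
  have "rev ps ! i = ps ! Suc j" "rev ps ! Suc i = ps ! j" using i j_def by (auto simp: rev_nth Suc_diff_Suc)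
  then have "c = {ps ! j, ps ! Suc j}" using c by (simp add: insert_commute)
  then show "c \<in> path_edges ps" using j unfolding path_edges_def by auto
qed

lemma path_edges_rev: "path_edges (rev ps) = path_edges ps"
  using path_edges_rev1[of ps] path_edges_rev1[of "rev ps"] by auto

lemma distinct_hd_last: "distinct xs \<Longrightarrow> xs \<noteq> [] \<Longrightarrow> hd xs = last xs \<Longrightarrow> xs = [hd xs]"
  by (cases xs) (auto split: if_splits)

lemma path_unique:
  assumes acyc: "acyclic_graph E"
  shows "is_path E p \<Longrightarrow> is_path E q \<Longrightarrow> hd p = hd q \<Longrightarrow> last p = last q \<Longrightarrow> p = q"
proof (induction p arbitrary: q)
  case Nil then show ?case by (simp add: is_path_def)
next
  case (Cons a p')
  have qne: "q \<noteq> []" using Cons.prems by (simp add: is_path_def)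
  show ?case
  proof (cases "p' = []")
    case True
    then have "hd q = last q" using Cons.prems by simp
    moreover have "distinct q" using Cons.prems(2) by (simp add: is_path_def)
    ultimately have "q = [hd q]" using qne distinct_hd_last by blast
    then show ?thesis using True Cons.prems by (metis list.sel(1))
  next
    case pne: False
    obtain q' where q: "q = a # q'" using qne Cons.prems(3) by (cases q) auto
    obtain x p'' where p': "p' = x # p''" using pne by (cases p') auto
    have ap: "a \<notin> set p'" using Cons.prems(1) by (simp add: is_path_def)
    have q'ne: "q' \<noteq> []"
    proof
      assume "q' = []"
      then have "last p' = a" using Cons.prems q pne by simp
      then show False using ap pne by (metis last_in_set)
    qed
    obtain y q'' where q'': "q' = y # q''" using q'ne by (cases q') auto
    have pp: "is_path E p'" and ax: "{a, x} \<in> E" using Cons.prems(1) p' is_path_Cons2 by fastforce+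
    have pq: "is_path E q'" using Cons.prems(2) q q'' is_path_Cons2 by fastforce
    show ?thesis
    proof (cases "x = y")
      case True
      have "p' = q'" using Cons.IH[OF pp pq] True p' q'' Cons.prems(4) pne q'ne q by simp
      then show ?thesis using q by simp
    next
      case xy: False
      show ?thesis
      proof (cases "x \<in> set q'")
        case True
        then obtain q1 q2 where qs: "q' = q1 @ x # q2" by (meson split_list)
        have q1ne: "q1 \<noteq> []" using qs q'' xy by (cases q1) auto
        have tk: "take (length q1 + 2) q = a # q1 @ [x]" using q qs by simp
        have "is_path E (a # q1 @ [x])" using is_path_take[OF Cons.prems(2), of "length q1 + 2"] tk by simp
        moreover have "length (a # q1 @ [x]) \<ge> 3" using q1ne by (cases q1) auto
        moreover have "{last (a # q1 @ [x]), hd (a # q1 @ [x])} \<in> E" using ax by (simp add: insert_commute)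
        ultimately show ?thesis using acyc unfolding acyclic_graph_def by blast
      next
        case False
        have xa: "x \<noteq> a" using ap p' by auto
        have xV: "x \<in> verts E" using pp p' by (auto simp: is_path_def)
        have xq: "is_path E (x # a # q')" using is_path_Cons2[of E x a q'] Cons.prems(2) q False xa xV ax
          by (simp add: insert_commute)
        moreover have "last p' = last (x # a # q')" using Cons.prems(4) q pne by simp
        moreover have "hd p' = hd (x # a # q')" using p' by simp
        ultimately have "p' = x # a # q'" using Cons.IH[OF pp xq] by blast
        then show ?thesis using ap by simp
      qed
    qed
  qed
qed




locale rt =
  fixes E :: "'v set set" and \<rho> :: 'v
  assumes rt: "rooted_tree E \<rho>"
begin

lemma finE: "finite E" and card2: "c \<in> E \<Longrightarrow> card c = 2"
  and conn: "connected_graph E" and acyc: "acyclic_graph E" and leafr: "leaf E \<rho>"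
  using rt unfolding rooted_tree_def is_tree_def graph_edges_def by auto

lemma rhoV: "\<rho> \<in> verts E" using leafr by (simp add: leaf_def)

lemma edge2: "c \<in> E \<Longrightarrow> \<exists>a b. a \<noteq> b \<and> c = {a, b}"
  using card2[of c] by (auto simp: card_2_iff)

lemma edge_verts: "c \<in> E \<Longrightarrow> x \<in> c \<Longrightarrow> x \<in> verts E"
  by (auto simp: verts_def)

lemma fin_verts: "finite (verts E)"
  unfolding verts_def
proof (rule finite_Union[OF finE])
  fix M assume "M \<in> E" then have "card M = 2" by (rule card2)
  then show "finite M" by (intro card_ge_0_finite) simp
qed

definition pt :: "'v \<Rightarrow> 'v list" where
  "pt v = (THE ps. is_path E ps \<and> hd ps = v \<and> last ps = \<rho>)"

definition par :: "'v \<Rightarrow> 'v" where "par v = pt v ! 1"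

definition anc :: "'v \<Rightarrow> 'v \<Rightarrow> bool" where "anc a x \<longleftrightarrow> a \<in> set (pt x)"

lemma pt_prop: assumes "v \<in> verts E"
  shows "is_path E (pt v) \<and> hd (pt v) = v \<and> last (pt v) = \<rho>"
proof -
  obtain ps where H: "is_path E ps \<and> hd ps = v \<and> last ps = \<rho>" using conn assms rhoV unfolding connected_graph_def by blast
  have "pt v = ps" unfolding pt_def
  proof (rule the_equality)
    fix ps' assume "is_path E ps' \<and> hd ps' = v \<and> last ps' = \<rho>"
    then show "ps' = ps" using path_unique[OF acyc, of ps' ps] H by simp
  qed (rule H)
  then show ?thesis using H by simp
qed

lemma path_V: "is_path E ps \<Longrightarrow> x \<in> set ps \<Longrightarrow> x \<in> verts E"
  by (auto simp: is_path_def)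

lemma path_hd_V: "is_path E ps \<Longrightarrow> hd ps \<in> verts E"
  by (auto simp: is_path_def)

lemma pt_eq: assumes "is_path E ps" "hd ps = v" "last ps = \<rho>" shows "pt v = ps"
proof -
  have "v \<in> verts E" using assms path_hd_V by blast
  then show ?thesis using pt_prop path_unique[OF acyc] assms by metis
qed

lemma pt_ne: "v \<in> verts E \<Longrightarrow> pt v \<noteq> []" using pt_prop by (auto simp: is_path_def)

lemma pt_rho: "pt \<rho> = [\<rho>]"
  using pt_eq[of "[\<rho>]"] rhoV by (simp add: is_path_def)

lemma pt_drop: assumes "v \<in> verts E" "i < length (pt v)"
  shows "pt (pt v ! i) = drop i (pt v)" "pt v ! i \<in> verts E"
proof -
  have p: "is_path E (drop i (pt v))" using is_path_drop pt_prop assms by blast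
  have "hd (drop i (pt v)) = pt v ! i" using assms by (simp add: hd_drop_conv_nth)
  moreover have "last (drop i (pt v)) = \<rho>" using assms pt_prop by simp
  ultimately show "pt (pt v ! i) = drop i (pt v)" using pt_eq p by blast
  show "pt v ! i \<in> verts E" using assms pt_prop path_V nth_mem by blast
qed

lemma pt_len: assumes "v \<in> verts E" "v \<noteq> \<rho>" shows "length (pt v) \<ge> 2"
proof (rule ccontr)
  assume "\<not> ?thesis"
  moreover have "length (pt v) \<noteq> 0" using pt_ne[OF assms(1)] by simp
  ultimately have "length (pt v) = Suc 0" by linarith
  then obtain a where "pt v = [a]" by (auto simp: length_Suc_conv)
  then show False using pt_prop[OF assms(1)] assms by auto
qed

lemma pt_cons: assumes "v \<in> verts E" "v \<noteq> \<rho>"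
  shows "pt v = v # pt (par v)" "par v \<in> verts E" "{v, par v} \<in> E"
proof -
  have "2 \<le> length (pt v)" by (rule pt_len[OF assms])
  then have l: "1 < length (pt v)" by linarith
  have "pt (par v) = drop 1 (pt v)" using pt_drop[OF assms(1) l] par_def by simp
  moreover have "pt v = hd (pt v) # tl (pt v)" using pt_ne assms by simp
  ultimately show "pt v = v # pt (par v)" using pt_prop assms by (simp add: drop_Suc)
  show "par v \<in> verts E" using pt_drop[OF assms(1) l] par_def by simp
  have "{pt v ! 0, pt v ! Suc 0} \<in> E" using pt_prop[OF assms(1)] l unfolding is_path_def by auto
  moreover have "pt v ! 0 = v" using pt_prop[OF assms(1)] pt_ne[OF assms(1)] by (simp add: hd_conv_nth)
  ultimately show "{v, par v} \<in> E" by (simp add: par_def)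
qed

lemma pt_len_par: "v \<in> verts E \<Longrightarrow> v \<noteq> \<rho> \<Longrightarrow> length (pt v) = Suc (length (pt (par v)))"
  using pt_cons by (metis length_Cons)

lemma par_neq: "v \<in> verts E \<Longrightarrow> v \<noteq> \<rho> \<Longrightarrow> par v \<noteq> v"
  using pt_len_par by force

lemma pt_len_card: "v \<in> verts E \<Longrightarrow> length (pt v) \<le> card (verts E)"
  using pt_prop fin_verts by (metis card_mono distinct_card is_path_def)

lemma anc_refl: "v \<in> verts E \<Longrightarrow> anc v v"
  using pt_prop pt_ne by (metis anc_def list.set_sel(1))

lemma anc_V: "anc a x \<Longrightarrow> x \<in> verts E \<Longrightarrow> a \<in> verts E"
  unfolding anc_def using pt_prop path_V by blast

lemma anc_drop: assumes "anc a x" "x \<in> verts E"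
  shows "\<exists>i<length (pt x). pt a = drop i (pt x) \<and> a = pt x ! i"
  using assms pt_drop unfolding anc_def by (metis in_set_conv_nth)

lemma anc_len: "anc a x \<Longrightarrow> x \<in> verts E \<Longrightarrow> length (pt a) \<le> length (pt x)"
  using anc_drop by fastforce

lemma anc_len_eq: assumes "anc a x" "x \<in> verts E" "length (pt a) = length (pt x)" shows "a = x"
proof -
  obtain i where i: "i < length (pt x)" "pt a = drop i (pt x)" "a = pt x ! i" using anc_drop assms by blast
  then have "i = 0" using assms(3) by simp
  then show ?thesis using i pt_prop[OF assms(2)] pt_ne[OF assms(2)] by (simp add: hd_conv_nth)
qed

lemma anc_trans: assumes "anc a b" "anc b c" "c \<in> verts E" shows "anc a c"
proof -
  obtain i where "pt b = drop i (pt c)" using anc_drop assms(2,3) by blast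
  then show ?thesis using assms(1) unfolding anc_def by (metis in_set_dropD)
qed

lemma anc_par_step: "x \<in> verts E \<Longrightarrow> x \<noteq> \<rho> \<Longrightarrow> anc a x \<longleftrightarrow> a = x \<or> anc a (par x)"
  using pt_cons(1)[of x] by (simp add: anc_def)

lemma anc_rho: "anc a \<rho> \<longleftrightarrow> a = \<rho>"
  unfolding anc_def pt_rho by simp

lemma low_unique: assumes "y \<in> verts E" "y \<noteq> \<rho>" "z \<in> verts E" "z \<noteq> \<rho>" "{y, par y} = {z, par z}"
  shows "y = z"
proof (rule ccontr)
  assume "y \<noteq> z"
  then have "y = par z" "z = par y" using assms(5) by (auto simp: doubleton_eq_iff)
  then show False using pt_len_par[of y] pt_len_par[of z] assms by simp
qed

lemma edge_low: assumes "c \<in> E" shows "\<exists>y. y \<in> verts E \<and> y \<noteq> \<rho> \<and> c = {y, par y}"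
proof -
  obtain a b where ab: "a \<noteq> b" "c = {a, b}" using edge2 assms by blast
  have aV: "a \<in> verts E" and bV: "b \<in> verts E" using ab assms edge_verts by auto
  show ?thesis
  proof (cases "b \<in> set (pt a)")
    case True
    then have ar: "a \<noteq> \<rho>" using pt_rho ab by auto
    have pa: "pt a = a # pt (par a)" using pt_cons aV ar by blast
    show ?thesis
    proof (cases "b = par a")
      case True then show ?thesis using ab aV ar by blast
    next
      case False
      then obtain i where i: "i < length (pt a)" "pt a ! i = b" using \<open>b \<in> set (pt a)\<close> by (meson in_set_conv_nth)
      have "i \<noteq> 0"
      proof
        assume "i = 0" then have "b = a" using i pa by simp
        then show False using ab by simp
      qed
      moreover have "i \<noteq> 1"
      proof
        assume "i = 1" then have "b = par a" using i by (simp add: par_def)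
        then show False using False by simp
      qed
      ultimately have i2: "i \<ge> 2" by simp
      let ?cy = "take (Suc i) (pt a)"
      have "is_path E ?cy" using is_path_take pt_prop aV by blast
      moreover have "length ?cy \<ge> 3" using i i2 by simp
      moreover have "last ?cy = b" using i by (simp add: take_Suc_conv_app_nth)
      moreover have "hd ?cy = a" using pa by simp
      moreover have "{b, a} \<in> E" using assms ab by (simp add: insert_commute)
      ultimately have "\<exists>ps. is_path E ps \<and> length ps \<ge> 3 \<and> {last ps, hd ps} \<in> E" by metis
      then show ?thesis using acyc unfolding acyclic_graph_def by blast
    qed
  next
    case False
    have "is_path E (b # pt a)"
    proof -
      obtain r where r: "pt a = a # r" using pt_prop[OF aV] pt_ne[OF aV] by (cases "pt a") auto
      show ?thesis using is_path_Cons2[of E b a r] r False bV pt_prop[OF aV] ab assms by (simp add: insert_commute)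
    qed
    then have pb: "pt b = b # pt a" using pt_eq pt_prop[OF aV] pt_ne[OF aV] by simp
    then have br: "b \<noteq> \<rho>" using pt_rho pt_ne[OF aV] by auto
    have "par b = a" using pb pt_prop[OF aV] pt_ne[OF aV] par_def by (simp add: hd_conv_nth)
    then show ?thesis using ab bV br by (metis insert_commute)
  qed
qed

end



context rt begin

definition Ch :: "'v \<Rightarrow> 'v set" where "Ch x = {z \<in> verts E. z \<noteq> \<rho> \<and> par z = x}"

definition EB :: "'v \<Rightarrow> 'v set set" where
  "EB x = {{y, par y} | y. y \<in> verts E \<and> y \<noteq> \<rho> \<and> anc x y}"

definition cons_at :: "('v set \<Rightarrow> 'g::ab_group_add) \<Rightarrow> 'v \<Rightarrow> bool" where
  "cons_at h v \<longleftrightarrow> h {v, par v} = sum h (child_edges E \<rho> v)"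

lemma pt_hd: "v \<in> verts E \<Longrightarrow> pt v ! 0 = v"
  using pt_prop pt_ne by (metis hd_conv_nth)

lemma pt_suc: assumes "y \<in> verts E" "Suc i < length (pt y)"
  shows "pt y ! Suc i = par (pt y ! i)" "pt y ! i \<noteq> \<rho>"
proof -
  have i: "i < length (pt y)" using assms by simp
  have d: "pt (pt y ! i) = drop i (pt y)" using pt_drop[OF assms(1) i] by simp
  then show "pt y ! Suc i = par (pt y ! i)" using assms by (simp add: par_def)
  show "pt y ! i \<noteq> \<rho>"
  proof
    assume "pt y ! i = \<rho>"
    then have "drop i (pt y) = [\<rho>]" using d pt_rho by simp
    then have "length (drop i (pt y)) = 1" by simp
    then show False using assms(2) by simp
  qed
qed

lemma parent_edge_eq: assumes "v \<in> verts E" "v \<noteq> \<rho>" shows "parent_edge E \<rho> v = {v, par v}"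
  unfolding parent_edge_def
proof (rule the_equality)
  have "length (pt v) \<ge> 2" using pt_len assms by blast
  moreover have "{pt v ! 0, pt v ! 1} = {v, par v}" using pt_hd assms par_def by simp
  ultimately show "\<exists>ps. is_path E ps \<and> hd ps = v \<and> last ps = \<rho> \<and> 2 \<le> length ps \<and> {v, par v} = {ps ! 0, ps ! 1}"
    using pt_prop[OF assms(1)] by metis
next
  fix c assume "\<exists>ps. is_path E ps \<and> hd ps = v \<and> last ps = \<rho> \<and> 2 \<le> length ps \<and> c = {ps ! 0, ps ! 1}"
  then obtain ps where ps: "is_path E ps" "hd ps = v" "last ps = \<rho>" "c = {ps ! 0, ps ! 1}" by blast
  then have "pt v = ps" using pt_eq by blast
  then have "ps ! 0 = v" using pt_hd[OF assms(1)] by simp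
  then show "c = {v, par v}" using ps \<open>pt v = ps\<close> by (simp add: par_def)
qed

lemma child_edges_char: assumes "v \<in> verts E" "v \<noteq> \<rho>"
  shows "c \<in> child_edges E \<rho> v \<longleftrightarrow> (\<exists>z. z \<in> Ch v \<and> c = {z, v})"
proof
  assume "c \<in> child_edges E \<rho> v"
  then have c: "c \<in> E" "v \<in> c" "c \<noteq> {v, par v}" using parent_edge_eq[OF assms] by (auto simp: child_edges_def)
  obtain y where y: "y \<in> verts E" "y \<noteq> \<rho>" "c = {y, par y}" using edge_low c(1) by blast
  have "y \<noteq> v" using y c by blast
  then have "par y = v" using y c by blast
  then show "\<exists>z. z \<in> Ch v \<and> c = {z, v}" using y unfolding Ch_def by blast
next
  assume "\<exists>z. z \<in> Ch v \<and> c = {z, v}"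
  then obtain z where z: "z \<in> verts E" "z \<noteq> \<rho>" "par z = v" "c = {z, v}" unfolding Ch_def by blast
  have cE: "c \<in> E" using pt_cons(3)[OF z(1,2)] z by simp
  have "c \<noteq> {v, par v}"
  proof
    assume "c = {v, par v}"
    then have "{z, par z} = {v, par v}" using z by simp
    then have "z = v" using low_unique z assms by blast
    then show False using par_neq z by blast
  qed
  then show "c \<in> child_edges E \<rho> v" using cE z parent_edge_eq[OF assms] by (simp add: child_edges_def)
qed

lemma child_edges_img: assumes "v \<in> verts E" "v \<noteq> \<rho>"
  shows "child_edges E \<rho> v = (\<lambda>z. {z, v}) ` Ch v" "inj_on (\<lambda>z. {z, v}) (Ch v)"
proof -
  show "child_edges E \<rho> v = (\<lambda>z. {z, v}) ` Ch v" using child_edges_char[OF assms] by blast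
  show "inj_on (\<lambda>z. {z, v}) (Ch v)"
  proof (rule inj_onI)
    fix z1 z2 assume "z1 \<in> Ch v" "z2 \<in> Ch v" "{z1, v} = {z2, v}"
    then show "z1 = z2" unfolding Ch_def by (metis doubleton_eq_iff par_neq)
  qed
qed

lemma child_edges_sub: "child_edges E \<rho> v \<subseteq> E" by (auto simp: child_edges_def)

lemma fin_child: "finite (child_edges E \<rho> v)" using child_edges_sub finE finite_subset by blast

lemma edges_at: assumes "v \<in> verts E" "v \<noteq> \<rho>"
  shows "{c \<in> E. v \<in> c} = insert {v, par v} (child_edges E \<rho> v)" "{v, par v} \<notin> child_edges E \<rho> v"
  using pt_cons(3)[OF assms] parent_edge_eq[OF assms] by (auto simp: child_edges_def)

lemma degree_eq: assumes "v \<in> verts E" "v \<noteq> \<rho>"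
  shows "degree E v = Suc (card (child_edges E \<rho> v))"
  unfolding degree_def edges_at[OF assms] using edges_at(2)[OF assms] fin_child by simp

lemma intv: "interior_vertex E \<rho> v \<Longrightarrow> v \<in> verts E \<and> v \<noteq> \<rho>"
  by (simp add: interior_vertex_def)

lemma intv_child_ne: assumes "interior_vertex E \<rho> v" shows "child_edges E \<rho> v \<noteq> {}"
proof -
  have "v \<in> verts E" "v \<noteq> \<rho>" "\<not> leaf E v" using assms by (auto simp: interior_vertex_def)
  then have "degree E v \<noteq> 1" by (simp add: leaf_def)
  then show ?thesis using degree_eq \<open>v \<in> verts E\<close> \<open>v \<noteq> \<rho>\<close> by fastforce
qed

lemma anc_desc: "anc x v \<Longrightarrow> v \<in> verts E \<Longrightarrow> v \<noteq> x \<Longrightarrow> \<exists>z\<in>Ch x. anc z v"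
proof (induction "length (pt v)" arbitrary: v rule: less_induct)
  case less
  have vr: "v \<noteq> \<rho>" using less.prems anc_rho by metis
  have ap: "anc x (par v)" using anc_par_step[OF less.prems(2) vr] less.prems by metis
  have pV: "par v \<in> verts E" using pt_cons vr less.prems by blast
  show ?case
  proof (cases "par v = x")
    case True then show ?thesis using less.prems vr anc_refl unfolding Ch_def by blast
  next
    case False
    have "length (pt (par v)) < length (pt v)" using pt_len_par[OF less.prems(2) vr] by simp
    then obtain z where "z \<in> Ch x" "anc z (par v)" using less.hyps ap pV False by blast
    then show ?thesis using anc_par_step[OF less.prems(2) vr] by metis
  qed
qed

lemma anc_same_len: assumes "anc a y" "anc b y" "y \<in> verts E" "length (pt a) = length (pt b)" shows "a = b"
proof -
  obtain i where i: "i < length (pt y)" "pt a = drop i (pt y)" "a = pt y ! i" using anc_drop assms by blast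
  obtain j where j: "j < length (pt y)" "pt b = drop j (pt y)" "b = pt y ! j" using anc_drop assms by blast
  have "i = j" using i j assms(4) by simp
  then show ?thesis using i j by simp
qed

lemma pt_path_edges: assumes "y \<in> verts E"
  shows "path_edges (pt y) = {{z, par z} | z. z \<in> set (pt y) \<and> z \<noteq> \<rho>}"
proof
  show "path_edges (pt y) \<subseteq> {{z, par z} | z. z \<in> set (pt y) \<and> z \<noteq> \<rho>}"
  proof
    fix c assume "c \<in> path_edges (pt y)"
    then obtain i where i: "Suc i < length (pt y)" "c = {pt y ! i, pt y ! Suc i}" unfolding path_edges_def by blast
    then have "c = {pt y ! i, par (pt y ! i)}" "pt y ! i \<noteq> \<rho>" using pt_suc assms by auto
    moreover have "pt y ! i \<in> set (pt y)" using i by simp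
    ultimately show "c \<in> {{z, par z} | z. z \<in> set (pt y) \<and> z \<noteq> \<rho>}" by blast
  qed
next
  show "{{z, par z} | z. z \<in> set (pt y) \<and> z \<noteq> \<rho>} \<subseteq> path_edges (pt y)"
  proof
    fix c assume "c \<in> {{z, par z} | z. z \<in> set (pt y) \<and> z \<noteq> \<rho>}"
    then obtain z where z: "z \<in> set (pt y)" "z \<noteq> \<rho>" "c = {z, par z}" by blast
    obtain i where i: "i < length (pt y)" "pt y ! i = z" using z by (meson in_set_conv_nth)
    have si: "Suc i < length (pt y)"
    proof (rule ccontr)
      assume "\<not> ?thesis"
      then have "i = length (pt y) - 1" using i by simp
      then have "z = last (pt y)" using i pt_ne[OF assms] by (simp add: last_conv_nth)
      then show False using z pt_prop[OF assms] by simp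
    qed
    moreover have "pt y ! Suc i = par z" using pt_suc[OF assms si] i by simp
    ultimately show "c \<in> path_edges (pt y)" using i z unfolding path_edges_def by force
  qed
qed

lemma below_iff: assumes "c' \<in> E" "w \<in> verts E" "w \<noteq> \<rho>"
  shows "below E \<rho> {w, par w} c' \<longleftrightarrow> (\<exists>y. y \<in> verts E \<and> y \<noteq> \<rho> \<and> c' = {y, par y} \<and> anc w y)"
proof
  assume "below E \<rho> {w, par w} c'"
  then obtain ps where ps: "is_path E ps" "hd ps = \<rho>" "length ps \<ge> 2" "{ps ! (length ps - 2), last ps} = c'"
     "{w, par w} \<in> path_edges ps" unfolding below_def by blast
  define y where "y = last ps"
  have rp: "is_path E (rev ps)" using ps is_path_rev by blast
  have "ps \<noteq> []" using ps(3) by auto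
  then have "y \<in> set ps" by (simp add: y_def)
  then have yV: "y \<in> verts E" using ps(1) path_V by blast
  have "hd (rev ps) = y" by (simp add: hd_rev y_def)
  moreover have "last (rev ps) = \<rho>" using ps(2) by (simp add: last_rev)
  ultimately have ptp: "pt y = rev ps" using pt_eq[OF rp] by blast
  have yr: "y \<noteq> \<rho>"
  proof
    assume "y = \<rho>" then have "pt y = [\<rho>]" using pt_rho by simp
    then have "length (rev ps) = 1" using ptp by simp
    then show False using ps(3) by simp
  qed
  have "rev ps ! 1 = ps ! (length ps - Suc (Suc 0))" using ps(3) by (simp add: rev_nth)
  also have "length ps - Suc (Suc 0) = length ps - 2" by simp
  finally have "rev ps ! 1 = ps ! (length ps - 2)" .
  then have "par y = ps ! (length ps - 2)" using ptp par_def by simp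
  then have c': "c' = {y, par y}" using ps(4) y_def by (simp add: insert_commute)
  have "path_edges (pt y) = path_edges ps" using ptp path_edges_rev by simp
  then have "{w, par w} \<in> path_edges (pt y)" using ps(5) by simp
  then obtain z where z: "z \<in> set (pt y)" "z \<noteq> \<rho>" "{w, par w} = {z, par z}" using pt_path_edges[OF yV] by blast
  have "z \<in> verts E" using z pt_prop[OF yV] path_V by blast
  then have "z = w" using low_unique[OF \<open>z \<in> verts E\<close> z(2) assms(2,3)] z(3) by simp
  then show "\<exists>y. y \<in> verts E \<and> y \<noteq> \<rho> \<and> c' = {y, par y} \<and> anc w y" using yV yr c' z anc_def by blast
next
  assume "\<exists>y. y \<in> verts E \<and> y \<noteq> \<rho> \<and> c' = {y, par y} \<and> anc w y"
  then obtain y where y: "y \<in> verts E" "y \<noteq> \<rho>" "c' = {y, par y}" "anc w y" by blast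
  let ?ps = "rev (pt y)"
  have "is_path E ?ps" using pt_prop[OF y(1)] is_path_rev by blast
  moreover have "hd ?ps = \<rho>" using pt_prop[OF y(1)] pt_ne[OF y(1)] by (simp add: hd_rev)
  moreover have l2: "length ?ps \<ge> 2" using pt_len y by simp
  moreover have "?ps ! (length ?ps - 2) = par y"
  proof -
    have "?ps ! (length ?ps - 2) = pt y ! (length (pt y) - Suc (length (pt y) - 2))" using l2 by (simp add: rev_nth)
    also have "length (pt y) - Suc (length (pt y) - 2) = 1" using l2 by simp
    finally show ?thesis by (simp add: par_def)
  qed
  moreover have "last ?ps = y" using pt_prop[OF y(1)] pt_ne[OF y(1)] by (simp add: last_rev)
  moreover have "{w, par w} \<in> path_edges ?ps" using path_edges_rev pt_path_edges[OF y(1)] y(4) assms(3) anc_def by auto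
  moreover have "{par y, y} = c'" using y(3) by (simp add: insert_commute)
  ultimately show "below E \<rho> {w, par w} c'" unfolding below_def by metis
qed

lemma near_end_eq: assumes "w \<in> verts E" "w \<noteq> \<rho>" shows "near_end E \<rho> {w, par w} = par w"
  unfolding near_end_def
proof (rule the_equality)
  have pV: "par w \<in> verts E" using pt_cons assms by blast
  let ?ps = "rev (pt (par w))"
  have "is_path E ?ps" using pt_prop[OF pV] is_path_rev by blast
  moreover have "hd ?ps = \<rho>" using pt_prop[OF pV] pt_ne[OF pV] by (simp add: hd_rev)
  moreover have "last ?ps = par w" using pt_prop[OF pV] pt_ne[OF pV] by (simp add: last_rev)
  moreover have "{w, par w} \<notin> path_edges ?ps"
  proof
    assume "{w, par w} \<in> path_edges ?ps"
    then have "{w, par w} \<in> path_edges (pt (par w))" by (simp add: path_edges_rev)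
    then obtain z where z: "z \<in> set (pt (par w))" "z \<noteq> \<rho>" "{w, par w} = {z, par z}"
      unfolding pt_path_edges[OF pV] by blast
    have "z \<in> verts E" using z pt_prop[OF pV] path_V by blast
    then have "z = w" using low_unique[OF \<open>z \<in> verts E\<close> z(2) assms(1,2)] z(3) by simp
    then have "anc w (par w)" using z anc_def by simp
    then have "length (pt w) \<le> length (pt (par w))" using anc_len[OF _ pV] by blast
    then show False using pt_len_par[OF assms] by simp
  qed
  ultimately have "\<exists>ps. is_path E ps \<and> hd ps = \<rho> \<and> last ps = par w \<and> {w, par w} \<notin> path_edges ps"
    by blast
  then show "par w \<in> {w, par w} \<and> (\<exists>ps. is_path E ps \<and> hd ps = \<rho> \<and> last ps = par w \<and> {w, par w} \<notin> path_edges ps)"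
    by simp
next
  fix u assume u: "u \<in> {w, par w} \<and> (\<exists>ps. is_path E ps \<and> hd ps = \<rho> \<and> last ps = u \<and> {w, par w} \<notin> path_edges ps)"
  show "u = par w"
  proof (rule ccontr)
    assume "u \<noteq> par w"
    then have uw: "u = w" using u by blast
    obtain ps where ps: "is_path E ps" "hd ps = \<rho>" "last ps = w" "{w, par w} \<notin> path_edges ps" using u uw by auto
    have "is_path E (rev ps)" using ps is_path_rev by blast
    moreover have "hd (rev ps) = w" "last (rev ps) = \<rho>" using ps by (auto simp: hd_rev last_rev)
    ultimately have "pt w = rev ps" using pt_eq by blast
    then have "path_edges ps = path_edges (pt w)" using path_edges_rev[of ps] by simp
    moreover have "w \<in> set (pt w)" using anc_refl[OF assms(1)] anc_def by simp
    then have "{w, par w} \<in> path_edges (pt w)" unfolding pt_path_edges[OF assms(1)] using assms(2) by blast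
    ultimately show False using ps by simp
  qed
qed

end



lemma friendly_step:
  fixes L :: "'g::ab_group_add \<Rightarrow> 'l" and h :: "'c \<Rightarrow> 'g"
  assumes fr: "friendly L" and fin: "finite CE" and ne: "CE \<noteq> {}" and Lg: "L g = L (sum h CE)"
  shows "\<exists>G. (\<forall>c\<in>CE. L (G c) = L (h c)) \<and> sum G CE = g"
proof -
  obtain cs where cs: "distinct cs" "set cs = CE" using finite_distinct_list[OF fin] by blast
  define k where "k = length cs"
  have k1: "k \<ge> 1" using cs ne k_def by (cases cs) auto
  show ?thesis
  proof (cases "k = 1")
    case True
    then obtain c where "cs = [c]" using k_def by (cases cs) auto
    then have CE: "CE = {c}" using cs by simp
    show ?thesis using Lg CE by (intro exI[of _ "\<lambda>_. g"]) simp
  next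
    case False
    then have k2: "Suc k \<ge> 3" using k1 by simp
    define gs0 where "gs0 = map h cs @ [sum h CE]"
    have sl: "sum_list (map h cs) = sum h CE" using cs by (simp add: sum_list_distinct_conv_sum_set)
    have Z: "gs0 \<in> Zm (Suc k)" unfolding Zm_def gs0_def using sl k_def by simp
    have mf: "m_friendly (Suc k) L" using fr k2 unfolding friendly_def by blast
    have lk: "map L gs0 ! k = L (sum h CE)" unfolding gs0_def k_def by (simp add: nth_append)
    have "{gs ! k |gs. gs \<in> Zm (Suc k) \<and> map L gs = map L gs0} = L -` {map L gs0 ! k}"
    proof -
      have H: "\<forall>l\<in>map L ` Zm (Suc k). \<forall>i<Suc k. {gs ! i |gs. gs \<in> Zm (Suc k) \<and> map L gs = l} = L -` {l ! i}"
        using mf by (simp only: m_friendly_def)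
      have mem: "map L gs0 \<in> map L ` Zm (Suc k)" using Z by (rule imageI)
      have "\<forall>i<Suc k. {gs ! i |gs. gs \<in> Zm (Suc k) \<and> map L gs = map L gs0} = L -` {map L gs0 ! i}"
        by (rule bspec[OF H mem])
      then have "k < Suc k \<longrightarrow> {gs ! k |gs. gs \<in> Zm (Suc k) \<and> map L gs = map L gs0} = L -` {map L gs0 ! k}"
        by (rule spec)
      then show ?thesis by (simp only: lessI simp_thms)
    qed
    moreover have "g \<in> L -` {map L gs0 ! k}" using lk Lg by simp
    ultimately have "g \<in> {gs ! k |gs. gs \<in> Zm (Suc k) \<and> map L gs = map L gs0}" by (simp only:)
    then have "\<exists>gs. g = gs ! k \<and> gs \<in> Zm (Suc k) \<and> map L gs = map L gs0" by (simp only: mem_Collect_eq)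
    then obtain gs where gs: "gs \<in> Zm (Suc k)" "map L gs = map L gs0" "gs ! k = g" by metis
    have lgs: "length gs = Suc k" using gs unfolding Zm_def by simp
    define G where "G c = gs ! (THE j. j < k \<and> cs ! j = c)" for c
    have Gj: "G (cs ! j) = gs ! j" if "j < k" for j
    proof -
      have "(THE i. i < k \<and> cs ! i = cs ! j) = j"
        using that cs(1) k_def by (intro the_equality) (auto simp: nth_eq_iff_index_eq)
      then show ?thesis by (simp add: G_def)
    qed
    have LG: "\<forall>c\<in>CE. L (G c) = L (h c)"
    proof
      fix c assume "c \<in> CE"
      then obtain j where j: "j < k" "cs ! j = c" using cs k_def by (metis in_set_conv_nth)
      have "G c = gs ! j" using Gj[OF j(1)] j(2) by simp
      then have "L (G c) = map L gs ! j" using j lgs by simp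
      also have "\<dots> = map L gs0 ! j" using gs by simp
      also have "\<dots> = L (h c)" using j unfolding gs0_def k_def by (simp add: nth_append)
      finally show "L (G c) = L (h c)" .
    qed
    have "sum G CE = sum_list (map G cs)" using cs by (simp add: sum_list_distinct_conv_sum_set)
    also have "map G cs = butlast gs"
    proof (rule nth_equalityI)
      show "length (map G cs) = length (butlast gs)" using lgs k_def by simp
      fix i assume "i < length (map G cs)"
      then have "i < k" using k_def by simp
      then show "map G cs ! i = butlast gs ! i" using Gj k_def lgs by (simp add: nth_butlast)
    qed
    also have "sum_list (butlast gs) = last gs" using gs unfolding Zm_def by simp
    also have "last gs = g"
    proof -
      have "gs \<noteq> []" using lgs by auto
      then have "last gs = gs ! (length gs - 1)" by (rule last_conv_nth)
      then show ?thesis using gs(3) lgs by simp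
    qed
    finally show ?thesis using LG by blast
  qed
qed

context rt begin

lemma EB_mem: "y \<in> verts E \<Longrightarrow> y \<noteq> \<rho> \<Longrightarrow> anc x y \<Longrightarrow> {y, par y} \<in> EB x"
  unfolding EB_def by blast

lemma EB_E: "c \<in> EB x \<Longrightarrow> \<exists>y. y \<in> verts E \<and> y \<noteq> \<rho> \<and> anc x y \<and> c = {y, par y}"
  unfolding EB_def by blast

lemma EB_iff: assumes "y \<in> verts E" "y \<noteq> \<rho>" shows "{y, par y} \<in> EB x \<longleftrightarrow> anc x y"
proof
  assume "{y, par y} \<in> EB x"
  then obtain y' where y': "y' \<in> verts E" "y' \<noteq> \<rho>" "anc x y'" "{y, par y} = {y', par y'}" using EB_E by blast
  then have "y = y'" using low_unique[OF assms y'(1,2) y'(4)] by simp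
  then show "anc x y" using y' by simp
qed (use assms EB_mem in blast)

lemma EB_sub: "EB x \<subseteq> E"
  using EB_E pt_cons(3) by blast

lemma anc_child: assumes "z \<in> Ch x" shows "anc x z" "x \<in> verts E" "z \<in> verts E" "z \<noteq> \<rho>" "par z = x"
proof -
  show zV: "z \<in> verts E" and zr: "z \<noteq> \<rho>" and pz: "par z = x" using assms by (auto simp: Ch_def)
  show "x \<in> verts E" using pt_cons(2)[OF zV zr] pz by simp
  then have "anc x x" by (rule anc_refl)
  then show "anc x z" using anc_par_step[OF zV zr] pz by metis
qed

lemma edges_in_EB: assumes "anc x v" "v \<in> verts E" "v \<noteq> \<rho>"
  shows "{v, par v} \<in> EB x" "child_edges E \<rho> v \<subseteq> EB x"
proof -
  show "{v, par v} \<in> EB x" using EB_mem assms by blast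
  show "child_edges E \<rho> v \<subseteq> EB x"
  proof
    fix c assume "c \<in> child_edges E \<rho> v"
    then obtain z where z: "z \<in> Ch v" "c = {z, v}" using child_edges_char[OF assms(2,3)] by blast
    have "anc x z" using anc_trans[OF assms(1) anc_child(1)[OF z(1)] anc_child(3)[OF z(1)]] .
    then show "c \<in> EB x" using EB_mem anc_child[OF z(1)] z(2) by metis
  qed
qed

lemma parent_notin_EB_child: assumes "z \<in> Ch x" "x \<noteq> \<rho>" shows "{x, par x} \<notin> EB z"
proof
  assume "{x, par x} \<in> EB z"
  then have "anc z x" using EB_iff anc_child[OF assms(1)] assms(2) by blast
  then have "length (pt z) \<le> length (pt x)" using anc_len anc_child[OF assms(1)] by blast
  then show False using pt_len_par[OF anc_child(3,4)[OF assms(1)]] anc_child(5)[OF assms(1)] by simp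
qed

lemma EB_mono: assumes "z \<in> Ch x" shows "EB z \<subseteq> EB x"
proof
  fix c assume "c \<in> EB z"
  then obtain y where y: "y \<in> verts E" "y \<noteq> \<rho>" "anc z y" "c = {y, par y}" using EB_E by blast
  have "anc x y" using anc_trans[OF anc_child(1)[OF assms] y(3) y(1)] .
  then show "c \<in> EB x" using EB_mem y by blast
qed

lemma EB_disj: assumes "z1 \<in> Ch x" "z2 \<in> Ch x" "c \<in> EB z1" "c \<in> EB z2" shows "z1 = z2"
proof -
  obtain y1 where y1: "y1 \<in> verts E" "y1 \<noteq> \<rho>" "anc z1 y1" "c = {y1, par y1}" using EB_E assms(3) by blast
  obtain y2 where y2: "y2 \<in> verts E" "y2 \<noteq> \<rho>" "anc z2 y2" "c = {y2, par y2}" using EB_E assms(4) by blast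
  have "y1 = y2" using low_unique[OF y1(1,2) y2(1,2)] y1(4) y2(4) by simp
  moreover have "length (pt z1) = length (pt z2)"
    using pt_len_par[OF anc_child(3,4)[OF assms(1)]] pt_len_par[OF anc_child(3,4)[OF assms(2)]]
      anc_child(5)[OF assms(1)] anc_child(5)[OF assms(2)] by simp
  ultimately show ?thesis using anc_same_len y1 y2 by blast
qed

lemma modify:
  fixes L :: "'g::ab_group_add \<Rightarrow> 'l"
  assumes fr: "friendly L"
  shows "x \<in> verts E \<Longrightarrow> x \<noteq> \<rho> \<Longrightarrow> (\<forall>v. anc x v \<and> interior_vertex E \<rho> v \<longrightarrow> cons_at h v) \<Longrightarrow>
    L g = L (h {x, par x}) \<Longrightarrow>
    \<exists>h'. (\<forall>v. anc x v \<and> interior_vertex E \<rho> v \<longrightarrow> cons_at h' v) \<and> (\<forall>c. L (h' c) = L (h c))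
       \<and> h' {x, par x} = g \<and> (\<forall>c. c \<notin> EB x \<longrightarrow> h' c = h c)"
proof (induction "card (verts E) - length (pt x)" arbitrary: x h g rule: less_induct)
  case less
  note xV = less.prems(1) and xr = less.prems(2) and hc = less.prems(3) and Lg = less.prems(4)
  have xEB: "{x, par x} \<in> EB x" using EB_mem[OF xV xr anc_refl[OF xV]] .
  show ?case
  proof (cases "interior_vertex E \<rho> x")
    case False
    define h' where "h' = h({x, par x} := g)"
    have "\<forall>v. anc x v \<and> interior_vertex E \<rho> v \<longrightarrow> cons_at h' v"
    proof (intro allI impI)
      fix v assume v: "anc x v \<and> interior_vertex E \<rho> v"
      then have vV: "v \<in> verts E" and vr: "v \<noteq> \<rho>" using intv by auto
      have vx: "v \<noteq> x" using v False by blast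
      have ne1: "{v, par v} \<noteq> {x, par x}"
      proof
        assume "{v, par v} = {x, par x}"
        then have "v = x" using low_unique[OF vV vr xV xr] by simp
        then show False using vx by simp
      qed
      have ne2: "{x, par x} \<notin> child_edges E \<rho> v"
      proof
        assume "{x, par x} \<in> child_edges E \<rho> v"
        then obtain z where z: "z \<in> Ch v" "{x, par x} = {z, v}" using child_edges_char[OF vV vr] by blast
        then have "{x, par x} = {z, par z}" using anc_child(5)[OF z(1)] by simp
        then have "x = z" using low_unique[OF xV xr anc_child(3,4)[OF z(1)]] by simp
        then have "par x = v" using anc_child(5)[OF z(1)] by simp
        then have "anc x (par x)" using v by simp
        then have "length (pt x) \<le> length (pt (par x))" using anc_len pt_cons(2)[OF xV xr] by blast
        then show False using pt_len_par[OF xV xr] by simp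
      qed
      have "sum h' (child_edges E \<rho> v) = sum h (child_edges E \<rho> v)"
        using ne2 by (intro sum.cong) (auto simp: h'_def)
      moreover have "h' {v, par v} = h {v, par v}" using ne1 by (simp add: h'_def)
      moreover have "cons_at h v" using hc v by blast
      ultimately show "cons_at h' v" by (simp add: cons_at_def)
    qed
    moreover have "\<forall>c. L (h' c) = L (h c)" using Lg by (simp add: h'_def)
    moreover have "\<forall>c. c \<notin> EB x \<longrightarrow> h' c = h c" using xEB by (auto simp: h'_def)
    ultimately show ?thesis by (intro exI[of _ h']) (simp add: h'_def)
  next
    case True
    define CE where "CE = child_edges E \<rho> x"
    have cx: "cons_at h x" using hc True anc_refl[OF xV] by blast
    then have "L g = L (sum h CE)" using Lg by (simp add: cons_at_def CE_def)
    then obtain G where G: "\<forall>c\<in>CE. L (G c) = L (h c)" "sum G CE = g"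
      using friendly_step[OF fr fin_child intv_child_ne[OF True]] unfolding CE_def by blast
    have "\<forall>z\<in>Ch x. \<exists>h'. (\<forall>v. anc z v \<and> interior_vertex E \<rho> v \<longrightarrow> cons_at h' v) \<and> (\<forall>c. L (h' c) = L (h c))
       \<and> h' {z, par z} = G {z, par z} \<and> (\<forall>c. c \<notin> EB z \<longrightarrow> h' c = h c)"
    proof
      fix z assume z: "z \<in> Ch x"
      note zz = anc_child[OF z]
      have "length (pt z) = Suc (length (pt x))" using pt_len_par[OF zz(3,4)] zz(5) by simp
      moreover have "length (pt z) \<le> card (verts E)" using pt_len_card zz(3) by blast
      ultimately have lt: "card (verts E) - length (pt z) < card (verts E) - length (pt x)" by simp
      have hz: "\<forall>v. anc z v \<and> interior_vertex E \<rho> v \<longrightarrow> cons_at h v"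
      proof (intro allI impI)
        fix v assume "anc z v \<and> interior_vertex E \<rho> v"
        moreover then have "anc x v" using anc_trans[OF zz(1)] intv by blast
        ultimately show "cons_at h v" using hc by blast
      qed
      have "{z, par z} \<in> CE" using child_edges_char[OF xV xr] z zz(5) unfolding CE_def by blast
      then have "L (G {z, par z}) = L (h {z, par z})" using G by blast
      then show "\<exists>h'. (\<forall>v. anc z v \<and> interior_vertex E \<rho> v \<longrightarrow> cons_at h' v) \<and> (\<forall>c. L (h' c) = L (h c))
       \<and> h' {z, par z} = G {z, par z} \<and> (\<forall>c. c \<notin> EB z \<longrightarrow> h' c = h c)"
        using less.hyps[OF lt zz(3,4) hz] by blast
    qed
    then have "\<exists>H. \<forall>z\<in>Ch x. (\<forall>v. anc z v \<and> interior_vertex E \<rho> v \<longrightarrow> cons_at (H z) v) \<and> (\<forall>c. L (H z c) = L (h c))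
       \<and> H z {z, par z} = G {z, par z} \<and> (\<forall>c. c \<notin> EB z \<longrightarrow> H z c = h c)"
      by (rule bchoice)
    then obtain H where H: "\<forall>z\<in>Ch x. (\<forall>v. anc z v \<and> interior_vertex E \<rho> v \<longrightarrow> cons_at (H z) v) \<and> (\<forall>c. L (H z c) = L (h c))
       \<and> H z {z, par z} = G {z, par z} \<and> (\<forall>c. c \<notin> EB z \<longrightarrow> H z c = h c)"
      by (rule exE)
    define h' where "h' c = (if c = {x, par x} then g else if \<exists>z\<in>Ch x. c \<in> EB z
        then H (SOME z. z \<in> Ch x \<and> c \<in> EB z) c else h c)" for c
    have h'z: "h' c = H z c" if z: "z \<in> Ch x" and c: "c \<in> EB z" for z c
    proof -
      have "c \<noteq> {x, par x}" using parent_notin_EB_child[OF z xr] c by blast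
      moreover have "(SOME z. z \<in> Ch x \<and> c \<in> EB z) = z"
        using z c EB_disj by (intro some_equality) blast+
      ultimately show ?thesis using z c by (auto simp: h'_def)
    qed
    have P1: "\<forall>v. anc x v \<and> interior_vertex E \<rho> v \<longrightarrow> cons_at h' v"
    proof (intro allI impI)
      fix v assume v: "anc x v \<and> interior_vertex E \<rho> v"
      then have vV: "v \<in> verts E" and vr: "v \<noteq> \<rho>" using intv by auto
      show "cons_at h' v"
      proof (cases "v = x")
        case True
        have "sum h' CE = sum G CE"
        proof (rule sum.cong)
          fix c assume "c \<in> CE"
          then obtain z where z: "z \<in> Ch x" "c = {z, x}" using child_edges_char[OF xV xr] unfolding CE_def by blast
          then have c: "c = {z, par z}" using anc_child(5)[OF z(1)] by simp
          have "c \<in> EB z" using EB_mem anc_child[OF z(1)] anc_refl c by metis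
          then have "h' c = H z c" using h'z z by blast
          also have "\<dots> = G c" using H z(1) unfolding c by blast
          finally show "h' c = G c" .
        qed simp
        moreover have "h' {x, par x} = g" by (simp add: h'_def)
        ultimately show ?thesis using True G(2) by (simp add: cons_at_def CE_def)
      next
        case False
        then obtain z where z: "z \<in> Ch x" "anc z v" using anc_desc v vV by blast
        have "cons_at (H z) v" using H z v by blast
        moreover have "h' {v, par v} = H z {v, par v}" using h'z z edges_in_EB[OF z(2) vV vr] by blast
        moreover have "sum h' (child_edges E \<rho> v) = sum (H z) (child_edges E \<rho> v)"
          using h'z z edges_in_EB[OF z(2) vV vr] by (intro sum.cong) blast+
        ultimately show ?thesis by (simp add: cons_at_def)
      qed
    qed
    have P2: "\<forall>c. L (h' c) = L (h c)"
    proof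
      fix c
      show "L (h' c) = L (h c)"
      proof (cases "c = {x, par x}")
        case True then show ?thesis using Lg by (simp add: h'_def)
      next
        case False
        show ?thesis
        proof (cases "\<exists>z\<in>Ch x. c \<in> EB z")
          case True
          then obtain z where "z \<in> Ch x" "c \<in> EB z" by blast
          then show ?thesis using h'z H by metis
        next
          case F2: False
          then show ?thesis using False by (simp add: h'_def)
        qed
      qed
    qed
    have P3: "\<forall>c. c \<notin> EB x \<longrightarrow> h' c = h c"
    proof (intro allI impI)
      fix c assume c: "c \<notin> EB x"
      then have "c \<noteq> {x, par x}" using xEB by blast
      moreover have "\<not> (\<exists>z\<in>Ch x. c \<in> EB z)" using c EB_mono by blast
      ultimately show "h' c = h c" by (simp add: h'_def)
    qed
    have "h' {x, par x} = g" by (simp add: h'_def)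
    then show ?thesis using P1 P2 P3 by blast
  qed
qed

end




lemma path_mono: "is_path F ps \<Longrightarrow> F \<subseteq> E \<Longrightarrow> is_path E ps"
  unfolding is_path_def verts_def by blast

lemma path_sub:
  assumes "is_path E ps" "length ps \<ge> 2" "\<forall>i. Suc i < length ps \<longrightarrow> {ps ! i, ps ! Suc i} \<in> F"
  shows "is_path F ps"
  unfolding is_path_def
proof (intro conjI)
  show "ps \<noteq> []" "distinct ps" using assms(1) by (auto simp: is_path_def)
  show "\<forall>i. Suc i < length ps \<longrightarrow> {ps ! i, ps ! Suc i} \<in> F" by (rule assms(3))
  show "set ps \<subseteq> verts F"
  proof
    fix x assume "x \<in> set ps"
    then obtain j where j: "j < length ps" "ps ! j = x" by (meson in_set_conv_nth)
    show "x \<in> verts F"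
    proof (cases "Suc j < length ps")
      case True
      then have "{ps ! j, ps ! Suc j} \<in> F" using assms(3) by blast
      then show ?thesis using j unfolding verts_def by blast
    next
      case False
      then have j1: "Suc (j - 1) < length ps" "Suc (j - 1) = j" using j assms(2) by auto
      then have "{ps ! (j - 1), ps ! Suc (j - 1)} \<in> F" using assms(3) by blast
      then show ?thesis using j j1 unfolding verts_def by (metis UnionI insertCI)
    qed
  qed
qed

definition mono1 :: "'v set set \<Rightarrow> ('v set \<Rightarrow> 'l) \<Rightarrow> ('v set \<times> 'l) multiset" where
  "mono1 E f = mset_set ((\<lambda>x. (x, f x)) ` E)"

lemma mono_img_list: "mono_img E (mset (map A [0..<d])) = (\<Sum>i\<in>{0..<d}. mono1 E (A i))"
proof -
  have "mono_img E (mset (map A [0..<d])) = sum_list (map (\<lambda>i. mono1 E (A i)) [0..<d])"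
    unfolding mono_img_def mono1_def
    by (simp only: mset_map[symmetric] sum_mset_sum_list map_map o_def)
  also have "\<dots> = (\<Sum>i\<in>{0..<d}. mono1 E (A i))"
    by (simp add: interv_sum_list_conv_sum_set_nat)
  finally show ?thesis .
qed

lemma mono1_split:
  assumes "finite E" "A \<subseteq> E" "\<forall>x\<in>A. f x = g x" "\<forall>x\<in>E - A. f x = k x"
  shows "mono1 E f = mono1 A g + mono1 (E - A) k"
proof -
  have "(\<lambda>x. (x, f x)) ` E = (\<lambda>x. (x, g x)) ` A \<union> (\<lambda>x. (x, k x)) ` (E - A)"
  proof -
    have "E = A \<union> (E - A)" using assms(2) by blast
    then have "(\<lambda>x. (x, f x)) ` E = (\<lambda>x. (x, f x)) ` A \<union> (\<lambda>x. (x, f x)) ` (E - A)" by blast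
    also have "(\<lambda>x. (x, f x)) ` A = (\<lambda>x. (x, g x)) ` A" using assms(3) by (intro image_cong) auto
    also have "(\<lambda>x. (x, f x)) ` (E - A) = (\<lambda>x. (x, k x)) ` (E - A)" using assms(4) by (intro image_cong) auto
    finally show ?thesis .
  qed
  moreover have "(\<lambda>x. (x, g x)) ` A \<inter> (\<lambda>x. (x, k x)) ` (E - A) = {}" by blast
  moreover have "finite A" using assms(1,2) finite_subset by blast
  ultimately show ?thesis unfolding mono1_def using assms(1) by (simp add: mset_set_Union)
qed

lemma binom_zero: "mset (map A [0..<d]) = mset (map B [0..<d]) \<Longrightarrow> binom d A B \<alpha> = 0"
  by (simp add: binom_def)

lemma binom_mono_eq:
  assumes "binom d X Y \<in> toric_ideal E1 r1 L"
  shows "mono_img E1 (mset (map X [0..<d])) = mono_img E1 (mset (map Y [0..<d]))"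
proof (rule ccontr)
  let ?MX = "mset (map X [0..<d])" and ?MY = "mset (map Y [0..<d])"
  assume ne: "mono_img E1 ?MX \<noteq> mono_img E1 ?MY"
  then have ne2: "?MX \<noteq> ?MY" by metis
  let ?p = "binom d X Y"
  have S: "{\<alpha>. ?p \<alpha> \<noteq> 0 \<and> mono_img E1 \<alpha> = mono_img E1 ?MX} = {?MX}"
  proof
    show "{\<alpha>. ?p \<alpha> \<noteq> 0 \<and> mono_img E1 \<alpha> = mono_img E1 ?MX} \<subseteq> {?MX}"
      using ne by (auto simp: binom_def split: if_splits)
    show "{?MX} \<subseteq> {\<alpha>. ?p \<alpha> \<noteq> 0 \<and> mono_img E1 \<alpha> = mono_img E1 ?MX}"
      using ne2 by (simp add: binom_def)
  qed
  have "(\<Sum>\<alpha>\<in>{\<alpha>. ?p \<alpha> \<noteq> 0 \<and> mono_img E1 \<alpha> = mono_img E1 ?MX}. ?p \<alpha>) = 0"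
    using assms unfolding toric_ideal_def by blast
  then have "?p ?MX = 0" unfolding S by simp
  then show False using ne2 by (simp add: binom_def)
qed

lemma binom_in:
  assumes mem: "\<forall>i<d. A i \<in> im_lab E r L \<and> B i \<in> im_lab E r L"
    and eq: "mono_img E (mset (map A [0..<d])) = mono_img E (mset (map B [0..<d]))"
  shows "binom d A B \<in> toric_ideal E r L"
proof -
  let ?MA = "mset (map A [0..<d])" and ?MB = "mset (map B [0..<d])"
  let ?p = "binom d A B"
  have supp: "{\<alpha>. ?p \<alpha> \<noteq> 0} \<subseteq> {?MA, ?MB}" by (auto simp: binom_def split: if_splits)
  have fin: "finite {\<alpha>. ?p \<alpha> \<noteq> 0}" using supp finite_subset by blast
  have sub: "\<forall>\<alpha>. ?p \<alpha> \<noteq> 0 \<longrightarrow> set_mset \<alpha> \<subseteq> im_lab E r L"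
  proof (intro allI impI)
    fix \<alpha> assume "?p \<alpha> \<noteq> 0"
    then have "\<alpha> = ?MA \<or> \<alpha> = ?MB" using supp by blast
    then show "set_mset \<alpha> \<subseteq> im_lab E r L" using mem by auto
  qed
  have sum0: "\<forall>\<beta>. (\<Sum>\<alpha>\<in>{\<alpha>. ?p \<alpha> \<noteq> 0 \<and> mono_img E \<alpha> = \<beta>}. ?p \<alpha>) = 0"
  proof
    fix \<beta>
    show "(\<Sum>\<alpha>\<in>{\<alpha>. ?p \<alpha> \<noteq> 0 \<and> mono_img E \<alpha> = \<beta>}. ?p \<alpha>) = 0"
    proof (cases "?MA = ?MB")
      case True
      then have S: "{\<alpha>. ?p \<alpha> \<noteq> 0 \<and> mono_img E \<alpha> = \<beta>} = {}" using binom_zero by blast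
      show ?thesis unfolding S by simp
    next
      case False
      show ?thesis
      proof (cases "mono_img E ?MA = \<beta>")
        case True
        then have S: "{\<alpha>. ?p \<alpha> \<noteq> 0 \<and> mono_img E \<alpha> = \<beta>} = {?MA, ?MB}"
          using False eq supp by (auto simp: binom_def)
        show ?thesis unfolding S using False by (simp add: binom_def)
      next
        case F2: False
        then have S: "{\<alpha>. ?p \<alpha> \<noteq> 0 \<and> mono_img E \<alpha> = \<beta>} = {}" using eq supp by blast
        show ?thesis unfolding S by simp
      qed
    qed
  qed
  show ?thesis unfolding toric_ideal_def using fin sub sum0 by blast
qed


context rt begin

lemma sub_transfer:
  assumes F: "F \<subseteq> E" and vV: "v \<in> verts E" "v \<noteq> \<rho>" and iv: "interior_vertex E \<rho> v"
    and allin: "{c \<in> E. v \<in> c} \<subseteq> F"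
    and ps: "is_path F ps" "hd ps = v" "last ps = r" "length ps \<ge> 2" "ps ! 1 = par v" and vr: "v \<noteq> r"
  shows "interior_vertex F r v" "parent_edge F r v = {v, par v}" "child_edges F r v = child_edges E \<rho> v"
proof -
  have psE: "is_path E ps" using path_mono ps(1) F by blast
  have "ps \<noteq> []" using ps(4) by auto
  then have ps0: "ps ! 0 = v" using ps(2) by (simp add: hd_conv_nth)
  show pe: "parent_edge F r v = {v, par v}"
    unfolding parent_edge_def
  proof (rule the_equality)
    show "\<exists>ps'. is_path F ps' \<and> hd ps' = v \<and> last ps' = r \<and> 2 \<le> length ps' \<and> {v, par v} = {ps' ! 0, ps' ! 1}"
      using ps ps0 by metis
  next
    fix c assume "\<exists>ps'. is_path F ps' \<and> hd ps' = v \<and> last ps' = r \<and> 2 \<le> length ps' \<and> c = {ps' ! 0, ps' ! 1}"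
    then obtain ps' where ps': "is_path F ps'" "hd ps' = v" "last ps' = r" "c = {ps' ! 0, ps' ! 1}" by blast
    have "is_path E ps'" using path_mono ps'(1) F by blast
    then have "ps' = ps" using path_unique[OF acyc _ psE] ps' ps by simp
    then show "c = {v, par v}" using ps' ps0 ps(5) by simp
  qed
  have ea: "{c \<in> F. v \<in> c} = {c \<in> E. v \<in> c}" using allin F by blast
  show "child_edges F r v = child_edges E \<rho> v"
    unfolding child_edges_def pe parent_edge_eq[OF vV] using ea by blast
  have "{v, par v} \<in> F" using allin pt_cons(3)[OF vV] by blast
  then have vF: "v \<in> verts F" unfolding verts_def by blast
  have "degree F v = degree E v" unfolding degree_def using ea by simp
  moreover have "\<not> leaf E v" using iv by (simp add: interior_vertex_def)
  ultimately have "\<not> leaf F v" using vV by (simp add: leaf_def)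
  then show "interior_vertex F r v" using vF vr by (simp add: interior_vertex_def)
qed

lemma child_in_EB: assumes "v \<in> verts E" "v \<noteq> \<rho>" "\<not> anc w v" "c \<in> child_edges E \<rho> v" "c \<in> EB w"
  shows "c = {w, par w}"
proof -
  obtain z where z: "z \<in> Ch v" "c = {z, v}" using child_edges_char[OF assms(1,2)] assms(4) by blast
  note zz = anc_child[OF z(1)]
  have c: "c = {z, par z}" using z zz by simp
  then have "anc w z" using EB_iff[OF zz(3,4)] assms(5) by simp
  then have "w = z \<or> anc w (par z)" using anc_par_step[OF zz(3,4)] by blast
  then have "z = w \<or> anc w v" using zz(5) by auto
  then have "z = w" using assms(3) by blast
  then show ?thesis using c by simp
qed

lemma Tm_transfer:
  assumes wV: "w \<in> verts E" and wr: "w \<noteq> \<rho>" and av: "anc w v" and iv: "interior_vertex E \<rho> v"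
    and cons: "consistent (EB w) (par w) h"
  shows "cons_at h v"
proof -
  have vV: "v \<in> verts E" and vr: "v \<noteq> \<rho>" using intv[OF iv] by auto
  obtain i where i: "i < length (pt v)" "pt w = drop i (pt v)" "w = pt v ! i" using anc_drop[OF av vV] by blast
  have "length (pt w) \<ge> 2" using pt_len wV wr by blast
  then have li: "Suc (Suc i) \<le> length (pt v)" using i by simp
  define ps where "ps = take (Suc (Suc i)) (pt v)"
  have psE: "is_path E ps" unfolding ps_def using is_path_take pt_prop[OF vV] by blast
  have lps: "length ps = Suc (Suc i)" using li by (simp add: ps_def)
  have hps: "hd ps = v" using pt_prop[OF vV] pt_ne[OF vV] by (simp add: ps_def)
  have "last ps = pt v ! Suc i" unfolding ps_def using li by (simp add: take_Suc_conv_app_nth)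
  also have "\<dots> = par w" using pt_suc(1)[OF vV] li i(3) by simp
  finally have lastps: "last ps = par w" .
  have ps1: "ps ! 1 = par v" unfolding ps_def par_def by simp
  have edges: "\<forall>j. Suc j < length ps \<longrightarrow> {ps ! j, ps ! Suc j} \<in> EB w"
  proof (intro allI impI)
    fix j assume j: "Suc j < length ps"
    then have jl: "Suc j < length (pt v)" "j \<le> i" using lps li by auto
    have "ps ! j = pt v ! j" "ps ! Suc j = pt v ! Suc j" using j lps by (auto simp: ps_def)
    then have e: "{ps ! j, ps ! Suc j} = {pt v ! j, par (pt v ! j)}" using pt_suc(1)[OF vV jl(1)] by simp
    have yV: "pt v ! j \<in> verts E" using pt_drop(2)[OF vV] jl by simp
    have yr: "pt v ! j \<noteq> \<rho>" using pt_suc(2)[OF vV jl(1)] .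
    have "pt (pt v ! j) = drop j (pt v)" using pt_drop(1)[OF vV] jl by simp
    moreover have "w \<in> set (drop j (pt v))"
    proof -
      have "drop j (pt v) ! (i - j) = pt v ! i" using jl i by simp
      moreover have "i - j < length (drop j (pt v))" using jl i by simp
      ultimately show ?thesis using i(3) by (metis nth_mem)
    qed
    ultimately have "anc w (pt v ! j)" by (simp add: anc_def)
    then show "{ps ! j, ps ! Suc j} \<in> EB w" using e EB_mem yV yr by simp
  qed
  have "length ps \<ge> 2" using lps by simp
  then have psF: "is_path (EB w) ps" by (rule path_sub[OF psE _ edges])
  have allin: "{c \<in> E. v \<in> c} \<subseteq> EB w" unfolding edges_at(1)[OF vV vr]
    using edges_in_EB[OF av vV vr] by (simp only: insert_subset simp_thms)
  have vpw: "v \<noteq> par w"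
  proof
    assume "v = par w"
    then have "length (pt w) \<le> length (pt (par w))" using anc_len[OF av vV] by simp
    then show False using pt_len_par[OF wV wr] by simp
  qed
  note T = sub_transfer[OF EB_sub vV vr iv allin psF hps lastps _ ps1 vpw]
  have "h (parent_edge (EB w) (par w) v) = sum h (child_edges (EB w) (par w) v)"
    using cons T(1) lps unfolding consistent_def by simp
  then show ?thesis using T lps by (simp add: cons_at_def)
qed

lemma Tp_transfer:
  assumes wV: "w \<in> verts E" and wr: "w \<noteq> \<rho>" and av: "\<not> anc w v" and iv: "interior_vertex E \<rho> v"
    and cons: "consistent (insert {w, par w} (E - EB w)) \<rho> h"
  shows "cons_at h v"
proof -
  have vV: "v \<in> verts E" and vr: "v \<noteq> \<rho>" using intv[OF iv] by auto
  let ?F = "insert {w, par w} (E - EB w)"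
  have FE: "?F \<subseteq> E" using pt_cons(3)[OF wV wr] by blast
  define ps where "ps = pt v"
  have psE: "is_path E ps" and hps: "hd ps = v" and lastps: "last ps = \<rho>" using pt_prop[OF vV] by (auto simp: ps_def)
  have lps: "length ps \<ge> 2" using pt_len[OF vV vr] by (simp add: ps_def)
  have ps1: "ps ! 1 = par v" by (simp add: ps_def par_def)
  have edges: "\<forall>j. Suc j < length ps \<longrightarrow> {ps ! j, ps ! Suc j} \<in> ?F"
  proof (intro allI impI)
    fix j assume j: "Suc j < length ps"
    then have e: "{ps ! j, ps ! Suc j} = {pt v ! j, par (pt v ! j)}" using pt_suc(1)[OF vV] by (simp add: ps_def)
    have jl: "j < length (pt v)" using j by (simp add: ps_def)
    have yV: "pt v ! j \<in> verts E" using pt_drop(2)[OF vV jl] .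
    have yr: "pt v ! j \<noteq> \<rho>" using pt_suc(2)[OF vV] j by (simp add: ps_def)
    have inE: "{pt v ! j, par (pt v ! j)} \<in> E" using pt_cons(3)[OF yV yr] .
    have "{pt v ! j, par (pt v ! j)} \<notin> EB w"
    proof
      assume "{pt v ! j, par (pt v ! j)} \<in> EB w"
      then have "anc w (pt v ! j)" using EB_iff[OF yV yr] by simp
      moreover have "anc (pt v ! j) v" using jl by (simp add: anc_def)
      ultimately show False using anc_trans vV av by blast
    qed
    then show "{ps ! j, ps ! Suc j} \<in> ?F" using e inE by simp
  qed
  have psF: "is_path ?F ps" using path_sub[OF psE lps edges] .
  have allin: "{c \<in> E. v \<in> c} \<subseteq> ?F"
  proof
    fix c assume c: "c \<in> {c \<in> E. v \<in> c}"
    then have "c = {v, par v} \<or> c \<in> child_edges E \<rho> v" using edges_at(1)[OF vV vr] by blast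
    then show "c \<in> ?F"
    proof
      assume "c = {v, par v}"
      then have "c \<notin> EB w" using EB_iff[OF vV vr] av by simp
      then show ?thesis using c by blast
    next
      assume ch: "c \<in> child_edges E \<rho> v"
      show ?thesis
      proof (cases "c \<in> EB w")
        case True then show ?thesis using child_in_EB[OF vV vr av ch] by simp
      next
        case False then show ?thesis using c by blast
      qed
    qed
  qed
  note T = sub_transfer[OF FE vV vr iv allin psF hps lastps lps ps1 vr]
  have "h (parent_edge ?F \<rho> v) = sum h (child_edges ?F \<rho> v)"
    using cons T(1) unfolding consistent_def by blast
  then show ?thesis using T by (simp add: cons_at_def)
qed


lemma glue_mem:
  fixes L :: "'g::ab_group_add \<Rightarrow> 'l"
  assumes fr: "friendly L" and wV: "w \<in> verts E" and wr: "w \<noteq> \<rho>"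
    and lm: "lm \<in> im_lab (EB w) (par w) L" and n: "n \<in> im_lab (insert {w, par w} (E - EB w)) \<rho> L"
    and eq: "lm {w, par w} = n {w, par w}"
  shows "glue E (EB w) lm n \<in> im_lab E \<rho> L"
proof -
  let ?e = "{w, par w}"
  let ?F = "insert ?e (E - EB w)"
  obtain h1 :: "'v set \<Rightarrow> 'g" where h1: "consistent (EB w) (par w) h1" "lm = restrict (L \<circ> h1) (EB w)"
    using lm unfolding im_lab_def by blast
  obtain h2 :: "'v set \<Rightarrow> 'g" where h2: "consistent ?F \<rho> h2" "n = restrict (L \<circ> h2) ?F"
    using n unfolding im_lab_def by blast
  have eEB: "?e \<in> EB w" using EB_mem[OF wV wr anc_refl[OF wV]] .
  define h0 where "h0 c = (if c \<in> EB w then h1 c else h2 c)" for c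
  have c0: "\<forall>v. anc w v \<and> interior_vertex E \<rho> v \<longrightarrow> cons_at h0 v"
  proof (intro allI impI)
    fix v assume v: "anc w v \<and> interior_vertex E \<rho> v"
    then have vV: "v \<in> verts E" and vr: "v \<noteq> \<rho>" using intv by auto
    have "cons_at h1 v" using Tm_transfer[OF wV wr _ _ h1(1)] v by blast
    moreover have "h0 {v, par v} = h1 {v, par v}" using edges_in_EB(1)[OF _ vV vr] v by (simp add: h0_def)
    moreover have "sum h0 (child_edges E \<rho> v) = sum h1 (child_edges E \<rho> v)"
      using edges_in_EB(2)[OF _ vV vr] v by (intro sum.cong) (auto simp: h0_def)
    ultimately show "cons_at h0 v" by (simp add: cons_at_def)
  qed
  have "lm ?e = L (h1 ?e)" using h1(2) eEB by simp
  moreover have "n ?e = L (h2 ?e)" using h2(2) by simp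
  ultimately have Lg: "L (h2 ?e) = L (h0 ?e)" using eq eEB by (simp add: h0_def)
  obtain h' where h'1: "\<forall>v. anc w v \<and> interior_vertex E \<rho> v \<longrightarrow> cons_at h' v"
    and h'2: "\<forall>c. L (h' c) = L (h0 c)" and h'3: "h' ?e = h2 ?e" and h'4: "\<forall>c. c \<notin> EB w \<longrightarrow> h' c = h0 c"
    using modify[OF fr wV wr c0 Lg] by blast
  have cons: "consistent E \<rho> h'"
    unfolding consistent_def
  proof (intro allI impI)
    fix v assume iv: "interior_vertex E \<rho> v"
    then have vV: "v \<in> verts E" and vr: "v \<noteq> \<rho>" using intv by auto
    have "cons_at h' v"
    proof (cases "anc w v")
      case True then show ?thesis using h'1 iv by blast
    next
      case False
      have c2: "cons_at h2 v" using Tp_transfer[OF wV wr False iv h2(1)] .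
      have "{v, par v} \<notin> EB w" using EB_iff[OF vV vr] False by simp
      then have "h' {v, par v} = h2 {v, par v}" using h'4 by (simp add: h0_def)
      moreover have "sum h' (child_edges E \<rho> v) = sum h2 (child_edges E \<rho> v)"
      proof (rule sum.cong)
        fix c assume c: "c \<in> child_edges E \<rho> v"
        show "h' c = h2 c"
        proof (cases "c \<in> EB w")
          case True then have "c = ?e" using child_in_EB[OF vV vr False c] by simp
          then show ?thesis using h'3 by simp
        next
          case F2: False then show ?thesis using h'4 by (simp add: h0_def)
        qed
      qed simp
      ultimately show ?thesis using c2 by (simp add: cons_at_def)
    qed
    then show "h' (parent_edge E \<rho> v) = sum h' (child_edges E \<rho> v)"
      using parent_edge_eq[OF vV vr] by (simp add: cons_at_def)
  qed
  have "glue E (EB w) lm n = restrict (L \<circ> h') E"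
  proof (rule ext)
    fix c
    show "glue E (EB w) lm n c = restrict (L \<circ> h') E c"
    proof (cases "c \<in> E")
      case False then show ?thesis by (simp add: glue_def)
    next
      case cE: True
      show ?thesis
      proof (cases "c \<in> EB w")
        case True
        then have "lm c = L (h1 c)" using h1(2) by simp
        moreover have "L (h' c) = L (h1 c)" using h'2 True by (simp add: h0_def)
        ultimately show ?thesis using cE True by (simp add: glue_def)
      next
        case False
        then have "c \<in> ?F" using cE by simp
        then have "n c = L (h2 c)" using h2(2) by simp
        moreover have "h' c = h2 c" using h'4 False by (simp add: h0_def)
        ultimately show ?thesis using cE False by (simp add: glue_def)
      qed
    qed
  qed
  then show ?thesis unfolding im_lab_def using cons by blast
qed

lemma split1: assumes "w \<in> verts E"
  shows "mono1 E (glue E (EB w) l m) = mono1 (EB w) l + mono1 (E - EB w) m"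
  using EB_sub by (intro mono1_split[OF finE EB_sub]) (auto simp: glue_def)

lemma split2: assumes "e = {w, par w}" "w \<in> verts E" "w \<noteq> \<rho>" "l e = m e"
  shows "mono1 E (glue E (EB w) l m) = mono1 (insert e (E - EB w)) m + mono1 (E - insert e (E - EB w)) l"
proof (rule mono1_split[OF finE])
  show "insert e (E - EB w) \<subseteq> E" using pt_cons(3)[OF assms(2,3)] assms(1) by blast
  show "\<forall>x\<in>insert e (E - EB w). glue E (EB w) l m x = m x"
  proof
    fix x assume x: "x \<in> insert e (E - EB w)"
    have eE: "e \<in> E" "e \<in> EB w" using pt_cons(3)[OF assms(2,3)] EB_mem[OF assms(2,3) anc_refl[OF assms(2)]] assms(1) by auto
    show "glue E (EB w) l m x = m x"
    proof (cases "x = e")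
      case True then show ?thesis using eE assms(4) by (simp add: glue_def)
    next
      case False then show ?thesis using x by (simp add: glue_def)
    qed
  qed
  show "\<forall>x\<in>E - insert e (E - EB w). glue E (EB w) l m x = l x" by (auto simp: glue_def)
qed

lemma half1:
  fixes L :: "'g::ab_group_add \<Rightarrow> 'l"
  assumes fr: "friendly L" and wV: "w \<in> verts E" and wr: "w \<noteq> \<rho>" and ew: "e = {w, par w}"
  shows "(\<forall>i<d. lm i \<in> im_lab (EB w) (par w) L
           \<and> lm' i \<in> im_lab (EB w) (par w) L
           \<and> lm' i e = lm i e
           \<and> n i \<in> im_lab (insert e (E - EB w)) \<rho> L \<and> n i e = lm i e)
      \<and> binom d lm lm' \<in> toric_ideal (EB w) (par w) L
      \<longrightarrow> (\<forall>i<d. glue E (EB w) (lm i) (n i) \<in> im_lab E \<rho> L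
                \<and> glue E (EB w) (lm' i) (n i) \<in> im_lab E \<rho> L)
        \<and> binom d (\<lambda>i. glue E (EB w) (lm i) (n i))
                  (\<lambda>i. glue E (EB w) (lm' i) (n i)) \<in> toric_ideal E \<rho> L"
proof (intro impI)
  assume H: "(\<forall>i<d. lm i \<in> im_lab (EB w) (par w) L
           \<and> lm' i \<in> im_lab (EB w) (par w) L
           \<and> lm' i e = lm i e
           \<and> n i \<in> im_lab (insert e (E - EB w)) \<rho> L \<and> n i e = lm i e)
      \<and> binom d lm lm' \<in> toric_ideal (EB w) (par w) L"
  have mem: "\<forall>i<d. glue E (EB w) (lm i) (n i) \<in> im_lab E \<rho> L \<and> glue E (EB w) (lm' i) (n i) \<in> im_lab E \<rho> L"
  proof (intro allI impI conjI)
    fix i assume i: "i < d"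
    then show "glue E (EB w) (lm i) (n i) \<in> im_lab E \<rho> L" using glue_mem[OF fr wV wr, of "lm i" "n i"] H ew by simp
    show "glue E (EB w) (lm' i) (n i) \<in> im_lab E \<rho> L" using glue_mem[OF fr wV wr, of "lm' i" "n i"] H ew i by simp
  qed
  have me: "mono_img (EB w) (mset (map lm [0..<d])) = mono_img (EB w) (mset (map lm' [0..<d]))"
    by (rule binom_mono_eq[OF conjunct2[OF H]])
  have "mono_img E (mset (map (\<lambda>i. glue E (EB w) (lm i) (n i)) [0..<d]))
     = mono_img (EB w) (mset (map lm [0..<d])) + (\<Sum>i\<in>{0..<d}. mono1 (E - EB w) (n i))"
    unfolding mono_img_list split1[OF wV] by (simp add: sum.distrib)
  moreover have "mono_img E (mset (map (\<lambda>i. glue E (EB w) (lm' i) (n i)) [0..<d]))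
     = mono_img (EB w) (mset (map lm' [0..<d])) + (\<Sum>i\<in>{0..<d}. mono1 (E - EB w) (n i))"
    unfolding mono_img_list split1[OF wV] by (simp add: sum.distrib)
  ultimately have "mono_img E (mset (map (\<lambda>i. glue E (EB w) (lm i) (n i)) [0..<d]))
     = mono_img E (mset (map (\<lambda>i. glue E (EB w) (lm' i) (n i)) [0..<d]))" using me by simp
  then show "(\<forall>i<d. glue E (EB w) (lm i) (n i) \<in> im_lab E \<rho> L
                \<and> glue E (EB w) (lm' i) (n i) \<in> im_lab E \<rho> L)
        \<and> binom d (\<lambda>i. glue E (EB w) (lm i) (n i))
                  (\<lambda>i. glue E (EB w) (lm' i) (n i)) \<in> toric_ideal E \<rho> L"
    using mem binom_in[OF mem] by blast
qed

lemma half2: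
  fixes L :: "'g::ab_group_add \<Rightarrow> 'l"
  assumes fr: "friendly L" and wV: "w \<in> verts E" and wr: "w \<noteq> \<rho>" and ew: "e = {w, par w}"
  shows "(\<forall>i<d. n i \<in> im_lab (insert e (E - EB w)) \<rho> L
           \<and> n' i \<in> im_lab (insert e (E - EB w)) \<rho> L
           \<and> n' i e = n i e
           \<and> lm i \<in> im_lab (EB w) (par w) L \<and> lm i e = n i e)
      \<and> binom d n n' \<in> toric_ideal (insert e (E - EB w)) \<rho> L
      \<longrightarrow> (\<forall>i<d. glue E (EB w) (lm i) (n i) \<in> im_lab E \<rho> L
                \<and> glue E (EB w) (lm i) (n' i) \<in> im_lab E \<rho> L)
        \<and> binom d (\<lambda>i. glue E (EB w) (lm i) (n i))
                  (\<lambda>i. glue E (EB w) (lm i) (n' i)) \<in> toric_ideal E \<rho> L"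
proof (intro impI)
  assume H: "(\<forall>i<d. n i \<in> im_lab (insert e (E - EB w)) \<rho> L
           \<and> n' i \<in> im_lab (insert e (E - EB w)) \<rho> L
           \<and> n' i e = n i e
           \<and> lm i \<in> im_lab (EB w) (par w) L \<and> lm i e = n i e)
      \<and> binom d n n' \<in> toric_ideal (insert e (E - EB w)) \<rho> L"
  have mem: "\<forall>i<d. glue E (EB w) (lm i) (n i) \<in> im_lab E \<rho> L \<and> glue E (EB w) (lm i) (n' i) \<in> im_lab E \<rho> L"
  proof (intro allI impI conjI)
    fix i assume i: "i < d"
    then show "glue E (EB w) (lm i) (n i) \<in> im_lab E \<rho> L" using glue_mem[OF fr wV wr, of "lm i" "n i"] H ew by simp
    show "glue E (EB w) (lm i) (n' i) \<in> im_lab E \<rho> L" using glue_mem[OF fr wV wr, of "lm i" "n' i"] H ew i by simp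
  qed
  have me: "mono_img (insert e (E - EB w)) (mset (map n [0..<d])) = mono_img (insert e (E - EB w)) (mset (map n' [0..<d]))"
    by (rule binom_mono_eq[OF conjunct2[OF H]])
  have s1: "mono1 E (glue E (EB w) (lm i) (n i)) = mono1 (insert e (E - EB w)) (n i) + mono1 (E - insert e (E - EB w)) (lm i)"
    if "i \<in> {0..<d}" for i
  proof -
    have "lm i e = n i e" using H that by simp
    then show ?thesis by (rule split2[OF ew wV wr])
  qed
  have s2: "mono1 E (glue E (EB w) (lm i) (n' i)) = mono1 (insert e (E - EB w)) (n' i) + mono1 (E - insert e (E - EB w)) (lm i)"
    if "i \<in> {0..<d}" for i
  proof -
    have "lm i e = n' i e" using H that by simp
    then show ?thesis by (rule split2[OF ew wV wr])
  qed
  have "mono_img E (mset (map (\<lambda>i. glue E (EB w) (lm i) (n i)) [0..<d]))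
     = mono_img (insert e (E - EB w)) (mset (map n [0..<d])) + (\<Sum>i\<in>{0..<d}. mono1 (E - insert e (E - EB w)) (lm i))"
    unfolding mono_img_list using s1 by (simp add: sum.distrib)
  moreover have "mono_img E (mset (map (\<lambda>i. glue E (EB w) (lm i) (n' i)) [0..<d]))
     = mono_img (insert e (E - EB w)) (mset (map n' [0..<d])) + (\<Sum>i\<in>{0..<d}. mono1 (E - insert e (E - EB w)) (lm i))"
    unfolding mono_img_list using s2 by (simp add: sum.distrib)
  ultimately have "mono_img E (mset (map (\<lambda>i. glue E (EB w) (lm i) (n i)) [0..<d]))
     = mono_img E (mset (map (\<lambda>i. glue E (EB w) (lm i) (n' i)) [0..<d]))" using me by simp
  then show "(\<forall>i<d. glue E (EB w) (lm i) (n i) \<in> im_lab E \<rho> L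
                \<and> glue E (EB w) (lm i) (n' i) \<in> im_lab E \<rho> L)
        \<and> binom d (\<lambda>i. glue E (EB w) (lm i) (n i))
                  (\<lambda>i. glue E (EB w) (lm i) (n' i)) \<in> toric_ideal E \<rho> L"
    using mem binom_in[OF mem] by blast
qed

end


theorem lemma4p4:
  fixes L :: "'g::{ab_group_add,finite} \<Rightarrow> 'l::finite"
    and E :: "'v set set" and \<rho> :: 'v and e :: "'v set"
  assumes "friendly L" and "rooted_tree E \<rho>" and "interior_edge E \<rho> e"
  shows
   "(\<forall>d lm lm' n.
      (\<forall>i<d. lm i \<in> im_lab (T_minus E \<rho> e) (near_end E \<rho> e) L
           \<and> lm' i \<in> im_lab (T_minus E \<rho> e) (near_end E \<rho> e) L
           \<and> lm' i e = lm i e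
           \<and> n i \<in> im_lab (T_plus E \<rho> e) \<rho> L \<and> n i e = lm i e)
      \<and> binom d lm lm' \<in> toric_ideal (T_minus E \<rho> e) (near_end E \<rho> e) L
      \<longrightarrow> (\<forall>i<d. glue E (T_minus E \<rho> e) (lm i) (n i) \<in> im_lab E \<rho> L
                \<and> glue E (T_minus E \<rho> e) (lm' i) (n i) \<in> im_lab E \<rho> L)
        \<and> binom d (\<lambda>i. glue E (T_minus E \<rho> e) (lm i) (n i))
                  (\<lambda>i. glue E (T_minus E \<rho> e) (lm' i) (n i)) \<in> toric_ideal E \<rho> L)
  \<and> (\<forall>d n n' lm.
      (\<forall>i<d. n i \<in> im_lab (T_plus E \<rho> e) \<rho> L
           \<and> n' i \<in> im_lab (T_plus E \<rho> e) \<rho> L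
           \<and> n' i e = n i e
           \<and> lm i \<in> im_lab (T_minus E \<rho> e) (near_end E \<rho> e) L \<and> lm i e = n i e)
      \<and> binom d n n' \<in> toric_ideal (T_plus E \<rho> e) \<rho> L
      \<longrightarrow> (\<forall>i<d. glue E (T_minus E \<rho> e) (lm i) (n i) \<in> im_lab E \<rho> L
                \<and> glue E (T_minus E \<rho> e) (lm i) (n' i) \<in> im_lab E \<rho> L)
        \<and> binom d (\<lambda>i. glue E (T_minus E \<rho> e) (lm i) (n i))
                  (\<lambda>i. glue E (T_minus E \<rho> e) (lm i) (n' i)) \<in> toric_ideal E \<rho> L)"
proof -
  interpret T: rt E \<rho> by (rule rt.intro) (rule assms(2))
  have eE: "e \<in> E" using assms(3) by (simp add: interior_edge_def)
  obtain w where w: "w \<in> verts E" "w \<noteq> \<rho>" "e = {w, T.par w}" using T.edge_low[OF eE] by blast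
  have Tm: "T_minus E \<rho> e = T.EB w"
  proof
    show "T_minus E \<rho> e \<subseteq> T.EB w"
    proof
      fix c assume "c \<in> T_minus E \<rho> e"
      then have c: "c \<in> E" "below E \<rho> {w, T.par w} c" using w(3) by (auto simp: T_minus_def)
      then show "c \<in> T.EB w" using T.below_iff[OF c(1) w(1,2)] T.EB_mem by blast
    qed
    show "T.EB w \<subseteq> T_minus E \<rho> e"
    proof
      fix c assume c: "c \<in> T.EB w"
      then have cE: "c \<in> E" using T.EB_sub by blast
      obtain y where "y \<in> verts E" "y \<noteq> \<rho>" "T.anc w y" "c = {y, T.par y}" using T.EB_E[OF c] by blast
      then have "below E \<rho> {w, T.par w} c" using T.below_iff[OF cE w(1,2)] by blast
      then show "c \<in> T_minus E \<rho> e" using cE w(3) by (simp add: T_minus_def)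
    qed
  qed
  have ne: "near_end E \<rho> e = T.par w" using T.near_end_eq[OF w(1,2)] w(3) by simp
  have Tp: "T_plus E \<rho> e = insert e (E - T.EB w)" unfolding T_plus_def Tm ..
  show ?thesis
    unfolding Tp Tm ne
    apply (intro conjI allI)
     apply (rule T.half1[OF assms(1) w])
    apply (rule T.half2[OF assms(1) w])
    done
qed


end
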